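(* Let $k$ be a field of characteristic $p>0$, $P$ a finite poset, $R=\mathcal{R}_k[J(P)]$ the Hibi ring and $\mathfrak{m}=R_+$. Then \[ \liminf_{e\to\infty}\frac{\nu(p^e)}{p^e}\ \ge\ \operatorname{rank}^*P+2, \] where $\nu(p^e)=\max\{r\in\mathbb{N}\mid\mathfrak{m}^r\not\subseteq\mathfrak{m}^{[p^e]}\}$.
   Context: Let $P=\{p_1,\dots,p_N\}$ be a finite poset and $J(P)$ the set of poset ideals of $P$ (down-closed subsets, including $\emptyset$ and $P$). The Hibi ring is $\mathcal{R}_k[J(P)]=k[\,T\prod_{p_i\in I}X_i\mid I\in J(P)\,]\subseteq k[T,X_1,\dots,X_N]$, each generator in degree $1$; $\mathfrak{m}=R_+$ is generated by these generators; $\mathfrak{m}^{[q]}=(x^q\mid x\in\mathfrak{m})$. $x\lessdot y$ means $x<y$ with no $z$ satisfying $x<z<y$. A path is a sequence $C=(q_1,\dots,q_t)$ of distinct elements of $P$ with $q_1$ minimal in $P$, consecutive elements related by $q_i\lessdot q_{i+1}$ or $q_{i+1}\lessdot q_i$, and $q_{t-1}\lessdot q_t$ (when $t\ge2$); it is maximal if $q_t$ is maximal in $P$. For $1<i<t$, $q_i$ is locally maximal if $q_{i-1}\lessdot q_i$ and $q_{i+1}\lessdot q_i$, locally minimal if $q_i\lessdot q_{i-1}$ and $q_i\lessdot q_{i+1}$; $q_1$ counts as locally minimal and $q_t$ as locally maximal. The decomposition $C=A_1+D_1+\cdots+D_{n-1}+A_n$ splits $C$ into consecutive blocks: $A_1$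 is $q_1$ through the first locally maximal element, $D_1$ the following elements through the next locally minimal element, $A_2$ the following elements through the next locally maximal element, etc., $A_n$ ending at $q_t$; $t(A_i)$ is the last element of $A_i$, $V(\cdot)$ the set of elements of a block, $\langle A\rangle=\{q\in P\mid q\le t(A)\}$, and $\langle A_i\setminus t(A_i)\rangle$ the poset ideal generated by the elements of $A_i$ other than $t(A_i)$. $C$ satisfies ( * ) if for all $1\le i\le n-1$: (1) $V(D_i)\cap(\bigcup_{m=1}^{i-1}\langle A_m\rangle\cup\langle A_i\setminus t(A_i)\rangle\cup\{t(A_i)\})=\emptyset$; (2) $V(A_{i+1})\cap\bigcup_{m=1}^{i}\langle A_m\rangle=\emptyset$. $\operatorname{len}^*C=\#\{i\mid q_i\lessdot q_{i+1}\}$, and $\operatorname{rank}^*P$ is the maximum of $\operatorname{len}^*C$ over maximal paths $C$ satisfying ( * ). *)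

theory Defs
  imports Complex_Main "HOL-Library.Poly_Mapping" "HOL-Library.Extended_Real"
    "HOL-Library.Liminf_Limsup"
begin

definition covers :: "'a::order set \<Rightarrow> 'a \<Rightarrow> 'a \<Rightarrow> bool" where
  "covers P x y \<longleftrightarrow> x \<in> P \<and> y \<in> P \<and> x < y \<and> \<not> (\<exists>z\<in>P. x < z \<and> z < y)"

definition minimal_in :: "'a::order set \<Rightarrow> 'a \<Rightarrow> bool" where
  "minimal_in P x \<longleftrightarrow> x \<in> P \<and> \<not> (\<exists>y\<in>P. y < x)"

definition maximal_in :: "'a::order set \<Rightarrow> 'a \<Rightarrow> bool" where
  "maximal_in P x \<longleftrightarrow> x \<in> P \<and> \<not> (\<exists>y\<in>P. x < y)"

text \<open>Poset ideals J(P): down-closed subsets (including the empty set and P).\<close>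
definition poset_ideals :: "'a::order set \<Rightarrow> 'a set set" where
  "poset_ideals P = {I. I \<subseteq> P \<and> (\<forall>x\<in>I. \<forall>y\<in>P. y \<le> x \<longrightarrow> y \<in> I)}"

definition down_set :: "'a::order set \<Rightarrow> 'a set \<Rightarrow> 'a set" where
  "down_set P S = {q \<in> P. \<exists>s\<in>S. q \<le> s}"

section \<open>Paths (lists q_1 ... q_t, 0-indexed)\<close>

definition is_path :: "'a::order set \<Rightarrow> 'a list \<Rightarrow> bool" where
  "is_path P xs \<longleftrightarrow> xs \<noteq> [] \<and> distinct xs \<and> set xs \<subseteq> P \<and> minimal_in P (hd xs) \<and>
     (\<forall>i. Suc i < length xs \<longrightarrow>
        covers P (xs ! i) (xs ! Suc i) \<or> covers P (xs ! Suc i) (xs ! i)) \<and>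
     (2 \<le> length xs \<longrightarrow> covers P (xs ! (length xs - 2)) (xs ! (length xs - 1)))"

definition is_maximal_path :: "'a::order set \<Rightarrow> 'a list \<Rightarrow> bool" where
  "is_maximal_path P xs \<longleftrightarrow> is_path P xs \<and> maximal_in P (last xs)"

definition loc_max :: "'a::order set \<Rightarrow> 'a list \<Rightarrow> nat \<Rightarrow> bool" where
  "loc_max P xs i \<longleftrightarrow> i < length xs \<and>
     (i = length xs - 1 \<or>
      (0 < i \<and> covers P (xs ! (i - 1)) (xs ! i) \<and> covers P (xs ! Suc i) (xs ! i)))"

definition loc_min :: "'a::order set \<Rightarrow> 'a list \<Rightarrow> nat \<Rightarrow> bool" where
  "loc_min P xs i \<longleftrightarrow> i < length xs \<and>
     (i = 0 \<or>
      (Suc i < length xs \<and> covers P (xs ! i) (xs ! (i - 1)) \<and> covers P (xs ! i) (xs ! Suc i)))"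

text \<open>Sorted positions of the locally maximal elements (M) and locally minimal elements (mi).
  With 0-indexed blocks, A_1 has positions [0, M!0], D_(i+1) has positions (M!i, mi!(i+1)],
  and A_(i+1) (for i > 0) has positions (mi!i, M!i].\<close>
definition lmax_pos :: "'a::order set \<Rightarrow> 'a list \<Rightarrow> nat list" where
  "lmax_pos P xs = sorted_list_of_set {i. loc_max P xs i}"

definition lmin_pos :: "'a::order set \<Rightarrow> 'a list \<Rightarrow> nat list" where
  "lmin_pos P xs = sorted_list_of_set {i. loc_min P xs i}"

text \<open>Positions of the block A_(i+1) (0-indexed block number i).\<close>
definition A_pos :: "'a::order set \<Rightarrow> 'a list \<Rightarrow> nat \<Rightarrow> nat set" where
  "A_pos P xs i = {j. j \<le> lmax_pos P xs ! i \<and> (i = 0 \<or> lmin_pos P xs ! i < j)}"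

text \<open>Positions of the block D_(i+1) (0-indexed block number i).\<close>
definition D_pos :: "'a::order set \<Rightarrow> 'a list \<Rightarrow> nat \<Rightarrow> nat set" where
  "D_pos P xs i = {j. lmax_pos P xs ! i < j \<and> j \<le> lmin_pos P xs ! Suc i}"

definition tA :: "'a::order set \<Rightarrow> 'a list \<Rightarrow> nat \<Rightarrow> 'a" where
  "tA P xs i = xs ! (lmax_pos P xs ! i)"

definition angA :: "'a::order set \<Rightarrow> 'a list \<Rightarrow> nat \<Rightarrow> 'a set" where
  "angA P xs i = down_set P {tA P xs i}"

text \<open>Condition (*), with paper index i (1..n-1) corresponding to 0-indexed i (0..n-2).\<close>
definition star_cond :: "'a::order set \<Rightarrow> 'a list \<Rightarrow> bool" where
  "star_cond P xs \<longleftrightarrow>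
     (\<forall>i. Suc i < length (lmax_pos P xs) \<longrightarrow>
        ((\<lambda>j. xs ! j) ` D_pos P xs i \<inter>
           ((\<Union>l<i. angA P xs l) \<union>
            down_set P ((\<lambda>j. xs ! j) ` (A_pos P xs i - {lmax_pos P xs ! i})) \<union>
            {tA P xs i}) = {}) \<and>
        ((\<lambda>j. xs ! j) ` A_pos P xs (Suc i) \<inter> (\<Union>l\<le>i. angA P xs l) = {}))"

definition len_star :: "'a::order set \<Rightarrow> 'a list \<Rightarrow> nat" where
  "len_star P xs = card {i. Suc i < length xs \<and> covers P (xs ! i) (xs ! Suc i)}"

definition rank_star :: "'a::order set \<Rightarrow> nat" where
  "rank_star P = Max {len_star P xs | xs. is_maximal_path P xs \<and> star_cond P xs}"

text \<open>Polynomials in the variables T = None and X_p = Some p, coefficients in 'k.\<close>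
type_synonym ('a, 'k) mpoly = "('a option \<Rightarrow>\<^sub>0 nat) \<Rightarrow>\<^sub>0 'k"

definition hibi_gen :: "'a set \<Rightarrow> ('a, 'k::comm_ring_1) mpoly" where
  "hibi_gen I = Poly_Mapping.single
     (Poly_Mapping.single None 1 + (\<Sum>p\<in>I. Poly_Mapping.single (Some p) 1)) 1"

definition hibi_gens :: "'a::order set \<Rightarrow> ('a, 'k::comm_ring_1) mpoly set" where
  "hibi_gens P = hibi_gen ` poset_ideals P"

inductive_set hibi_ring :: "'a::order set \<Rightarrow> ('a, 'k::field) mpoly set" for P where
  const: "Poly_Mapping.single 0 c \<in> hibi_ring P"
| gen: "g \<in> hibi_gens P \<Longrightarrow> g \<in> hibi_ring P"
| add: "f \<in> hibi_ring P \<Longrightarrow> g \<in> hibi_ring P \<Longrightarrow> f + g \<in> hibi_ring P"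
| mult: "f \<in> hibi_ring P \<Longrightarrow> g \<in> hibi_ring P \<Longrightarrow> f * g \<in> hibi_ring P"

inductive_set ideal_gen :: "'r::comm_ring_1 set \<Rightarrow> 'r set \<Rightarrow> 'r set" for R S where
  zero: "0 \<in> ideal_gen R S"
| step: "r \<in> R \<Longrightarrow> s \<in> S \<Longrightarrow> f \<in> ideal_gen R S \<Longrightarrow> r * s + f \<in> ideal_gen R S"

definition hibi_max :: "'a::order set \<Rightarrow> ('a, 'k::field) mpoly set" where
  "hibi_max P = ideal_gen (hibi_ring P) (hibi_gens P)"

definition ideal_power :: "'r::comm_ring_1 set \<Rightarrow> 'r set \<Rightarrow> nat \<Rightarrow> 'r set" where
  "ideal_power R I r = ideal_gen R {prod_list xs | xs. length xs = r \<and> set xs \<subseteq> I}"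

definition frobenius_power :: "'r::comm_ring_1 set \<Rightarrow> 'r set \<Rightarrow> nat \<Rightarrow> 'r set" where
  "frobenius_power R I q = ideal_gen R {x ^ q | x. x \<in> I}"

definition hibi_nu :: "'k::field itself \<Rightarrow> 'a::order set \<Rightarrow> nat \<Rightarrow> nat" where
  "hibi_nu _ P q = Max {r. \<not> (ideal_power (hibi_ring P) (hibi_max P :: ('a, 'k) mpoly set) r
                           \<subseteq> frobenius_power (hibi_ring P) (hibi_max P) q)}"

end

theory Submission
  imports Defs "HOL-Computational_Algebra.Primes"
begin


lemma hibi_ring_one: "(1 :: ('a::order,'k::field) mpoly) \<in> hibi_ring P"
  using hibi_ring.const[of 1 P] by simp

lemma ideal_gen_add:
  assumes "x \<in> ideal_gen R S" "y \<in> ideal_gen R S"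
  shows "x + y \<in> ideal_gen R S"
  using assms
proof (induction x rule: ideal_gen.induct)
  case zero then show ?case by simp
next
  case (step r s f)
  have "r * s + f + y = r * s + (f + y)" by (simp add: add.assoc)
  then show ?case using step ideal_gen.step[of r R s S "f+y"] by metis
qed

lemma ideal_gen_mult_left:
  assumes "x \<in> ideal_gen R S" "a \<in> R"
    and closed: "\<And>u v. u \<in> R \<Longrightarrow> v \<in> R \<Longrightarrow> u * v \<in> R"
  shows "a * x \<in> ideal_gen R S"
  using assms(1)
proof (induction x rule: ideal_gen.induct)
  case zero then show ?case by (simp add: ideal_gen.zero)
next
  case (step r s f)
  have "a * (r * s + f) = (a * r) * s + a * f" by (simp add: algebra_simps)
  then show ?case using step closed[OF assms(2) step(1)] by (simp add: ideal_gen.step)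
qed

lemma ideal_gen_base:
  assumes "s \<in> S" "1 \<in> R"
  shows "s \<in> ideal_gen R S"
  using ideal_gen.step[OF assms(2) assms(1) ideal_gen.zero] by simp

lemma ideal_gen_mono:
  assumes "S \<subseteq> ideal_gen R T" "x \<in> ideal_gen R S"
    and closed: "\<And>u v. u \<in> R \<Longrightarrow> v \<in> R \<Longrightarrow> u * v \<in> R"
  shows "x \<in> ideal_gen R T"
  using assms(2)
proof (induction x rule: ideal_gen.induct)
  case zero then show ?case by (simp add: ideal_gen.zero)
next
  case (step r s f)
  then show ?case using ideal_gen_mult_left[OF _ step(1) closed] assms(1)
    by (meson ideal_gen_add subsetD)
qed

lemma ideal_gen_prod:
  assumes "x \<in> ideal_gen R S" "y \<in> ideal_gen R T"
    and closed: "\<And>u v. u \<in> R \<Longrightarrow> v \<in> R \<Longrightarrow> u * v \<in> R"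
    and one: "1 \<in> R"
  shows "x * y \<in> ideal_gen R {s * t | s t. s \<in> S \<and> t \<in> T}"
  using assms(1)
proof (induction x rule: ideal_gen.induct)
  case zero then show ?case by (simp add: ideal_gen.zero)
next
  case (step r s f)
  have sy: "s * y \<in> ideal_gen R {s * t | s t. s \<in> S \<and> t \<in> T}"
    using assms(2)
  proof (induction y rule: ideal_gen.induct)
    case zero then show ?case by (simp add: ideal_gen.zero)
  next
    case (step r' t g)
    have "s * (r' * t + g) = r' * (s * t) + s * g" by (simp add: algebra_simps)
    moreover have "s * t \<in> {s * t | s t. s \<in> S \<and> t \<in> T}" using \<open>s \<in> S\<close> step(2) by blast
    ultimately show ?case using step by (simp add: ideal_gen.step)
  qed
  have "(r * s + f) * y = r * (s * y) + f * y" by (simp add: algebra_simps)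
  moreover have "r * (s * y) \<in> ideal_gen R {s * t | s t. s \<in> S \<and> t \<in> T}"
    by (rule ideal_gen_mult_left[OF sy step(1) closed])
  ultimately show ?case using step(4) ideal_gen_add by simp
qed


definition cone :: "'a::order set \<Rightarrow> ('a option \<Rightarrow>\<^sub>0 nat) \<Rightarrow> bool" where
  "cone P v \<longleftrightarrow> (\<forall>a\<in>P. \<forall>b\<in>P. a \<le> b \<longrightarrow> Poly_Mapping.lookup v (Some b) \<le> Poly_Mapping.lookup v (Some a)) \<and>
     (\<forall>a\<in>P. Poly_Mapping.lookup v (Some a) \<le> Poly_Mapping.lookup v None)"

definition eI :: "'a set \<Rightarrow> ('a option \<Rightarrow>\<^sub>0 nat)" where
  "eI I = Poly_Mapping.single None 1 + (\<Sum>p\<in>I. Poly_Mapping.single (Some p) 1)"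

lemma lookup_eI_None: "Poly_Mapping.lookup (eI I) None = 1"
  by (simp add: eI_def lookup_add lookup_sum lookup_single)

lemma lookup_eI_Some: "finite I \<Longrightarrow> Poly_Mapping.lookup (eI I) (Some p) = (if p \<in> I then 1 else 0)"
  by (simp add: eI_def lookup_add lookup_sum lookup_single when_def)

lemma hibi_gen_eI: "hibi_gen I = Poly_Mapping.single (eI I) 1"
  by (simp add: hibi_gen_def eI_def)

lemma cone_zero: "cone P 0" by (simp add: cone_def)

lemma cone_add: "cone P a \<Longrightarrow> cone P b \<Longrightarrow> cone P (a + b)"
  unfolding cone_def lookup_add by (meson add_mono)

lemma cone_eI: assumes "finite P" "I \<in> poset_ideals P" shows "cone P (eI I)"
proof -
  have fI: "finite I" using assms by (auto simp: poset_ideals_def intro: finite_subset)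
  show ?thesis using assms(2) unfolding cone_def
    by (auto simp: lookup_eI_Some[OF fI] lookup_eI_None poset_ideals_def)
qed

lemma keys_ring:
  assumes "f \<in> hibi_ring P" "finite P"
  shows "\<forall>k\<in>Poly_Mapping.keys f. cone P k"
  using assms(1)
proof (induction f rule: hibi_ring.induct)
  case (const c) then show ?case by (simp add: cone_zero)
next
  case (gen g)
  then obtain I where "I \<in> poset_ideals P" "g = hibi_gen I" by (auto simp: hibi_gens_def)
  then show ?case using cone_eI[OF assms(2)] by (simp add: hibi_gen_eI)
next
  case (add f g) then show ?case using keys_add[of f g] by blast
next
  case (mult f g)
  show ?case
  proof
    fix k assume "k \<in> Poly_Mapping.keys (f * g)"
    then obtain a b where "k = a + b" "a \<in> Poly_Mapping.keys f" "b \<in> Poly_Mapping.keys g" using keys_mult[of f g] by blast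
    then show "cone P k" using mult cone_add by blast
  qed
qed

lemma hibi_ring_mult: "u \<in> hibi_ring P \<Longrightarrow> v \<in> hibi_ring P \<Longrightarrow> u * v \<in> hibi_ring P"
  by (rule hibi_ring.mult)

definition Kp :: "'a::order set \<Rightarrow> ('a option \<Rightarrow>\<^sub>0 nat) set" where
  "Kp P = {h + eI I | h I. cone P h \<and> I \<in> poset_ideals P}"

lemma keys_max:
  assumes "x \<in> hibi_max P" "finite P"
  shows "Poly_Mapping.keys x \<subseteq> Kp P"
  using assms(1) unfolding hibi_max_def
proof (induction x rule: ideal_gen.induct)
  case zero then show ?case by simp
next
  case (step r s f)
  obtain I where I: "I \<in> poset_ideals P" "s = hibi_gen I" using step(2) by (auto simp: hibi_gens_def)
  have "Poly_Mapping.keys (r * s) \<subseteq> Kp P"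
  proof
    fix k assume "k \<in> Poly_Mapping.keys (r * s)"
    then obtain a b where "k = a + b" "a \<in> Poly_Mapping.keys r" "b \<in> Poly_Mapping.keys s" using keys_mult[of r s] by blast
    then have "b = eI I" "cone P a" using I keys_ring[OF step(1) assms(2)] by (auto simp: hibi_gen_eI)
    then show "k \<in> Kp P" using \<open>k = a + b\<close> I unfolding Kp_def by blast
  qed
  then show ?case using step(4) keys_add[of "r*s" f] by blast
qed

primrec smul :: "nat \<Rightarrow> ('b \<Rightarrow>\<^sub>0 nat) \<Rightarrow> ('b \<Rightarrow>\<^sub>0 nat)" where
  "smul 0 a = 0"
| "smul (Suc n) a = a + smul n a"

lemma lookup_smul: "Poly_Mapping.lookup (smul n a) k = n * Poly_Mapping.lookup a k"
  by (induction n) (simp_all add: lookup_add)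

lemma single_pow: "(Poly_Mapping.single a (c::'k::comm_semiring_1)) ^ n = Poly_Mapping.single (smul n a) (c ^ n)"
  by (induction n) (simp_all add: mult_single)

lemma CHAR_mpoly: "CHAR(('a, 'k::comm_ring_1) mpoly) = CHAR('k)"
proof (rule CHAR_eqI)
  show "of_nat CHAR('k) = (0::('a,'k) mpoly)"
    by (metis of_nat_CHAR single_of_nat single_zero)
  fix x assume "of_nat x = (0::('a,'k) mpoly)"
  then have "Poly_Mapping.single (0::'a option \<Rightarrow>\<^sub>0 nat) (of_nat x :: 'k) = 0"
    using single_of_nat[where 'a="'a option \<Rightarrow>\<^sub>0 nat" and 'b='k] by simp
  then have "Poly_Mapping.lookup (Poly_Mapping.single (0::'a option \<Rightarrow>\<^sub>0 nat) (of_nat x :: 'k)) 0 = 0" by simp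
  then have "(of_nat x :: 'k) = 0" by (simp add: lookup_of_nat)
  then show "CHAR('k) dvd x" by (simp add: of_nat_eq_0_iff_char_dvd)
qed

lemma poly_sum_monomials: "(x::'b \<Rightarrow>\<^sub>0 'k::comm_monoid_add) = (\<Sum>k\<in>Poly_Mapping.keys x. Poly_Mapping.single k (Poly_Mapping.lookup x k))"
proof (rule poly_mapping_eqI)
  fix k'
  have "Poly_Mapping.lookup (\<Sum>k\<in>Poly_Mapping.keys x. Poly_Mapping.single k (Poly_Mapping.lookup x k)) k' = (\<Sum>k\<in>Poly_Mapping.keys x. (Poly_Mapping.lookup x k when k = k'))"
    by (simp add: lookup_sum lookup_single)
  also have "\<dots> = Poly_Mapping.lookup x k'"
  proof (cases "k' \<in> Poly_Mapping.keys x")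
    case True
    then show ?thesis by (simp add: when_def sum.delta'[of "Poly_Mapping.keys x" k' "Poly_Mapping.lookup x"] )
  next
    case False
    then have "(\<Sum>k\<in>Poly_Mapping.keys x. (Poly_Mapping.lookup x k when k = k')) = 0"
      by (intro sum.neutral) (auto simp: when_def)
    then show ?thesis using False by (simp add: in_keys_iff)
  qed
  finally show "Poly_Mapping.lookup x k' = Poly_Mapping.lookup (\<Sum>k\<in>Poly_Mapping.keys x. Poly_Mapping.single k (Poly_Mapping.lookup x k)) k'" by simp
qed

lemma frob_keys:
  fixes x :: "('a, 'k::field) mpoly"
  assumes "prime CHAR('k)" "q = CHAR('k) ^ e"
  shows "Poly_Mapping.keys (x ^ q) \<subseteq> smul q ` Poly_Mapping.keys x"
proof -
  have pr: "prime CHAR(('a, 'k) mpoly)" "q = CHAR(('a,'k) mpoly) ^ e" using assms by (simp_all add: CHAR_mpoly)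
  have "x ^ q = (\<Sum>k\<in>Poly_Mapping.keys x. Poly_Mapping.single k (Poly_Mapping.lookup x k)) ^ q"
    by (subst poly_sum_monomials[of x]) simp
  also have "\<dots> = (\<Sum>k\<in>Poly_Mapping.keys x. Poly_Mapping.single k (Poly_Mapping.lookup x k) ^ q)"
    by (rule freshmans_dream_sum'[OF pr])
  also have "\<dots> = (\<Sum>k\<in>Poly_Mapping.keys x. Poly_Mapping.single (smul q k) (Poly_Mapping.lookup x k ^ q))"
    by (simp add: single_pow)
  finally have "Poly_Mapping.keys (x ^ q) \<subseteq> (\<Union>k\<in>Poly_Mapping.keys x. Poly_Mapping.keys (Poly_Mapping.single (smul q k) (Poly_Mapping.lookup x k ^ q)))"
    using keys_sum by metis
  also have "\<dots> \<subseteq> smul q ` Poly_Mapping.keys x" by auto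
  finally show ?thesis .
qed

lemma keys_frob:
  fixes y :: "('a::order, 'k::field) mpoly"
  assumes "y \<in> frobenius_power (hibi_ring P) (hibi_max P) q" "finite P"
    "prime CHAR('k)" "q = CHAR('k) ^ e"
  shows "\<forall>k\<in>Poly_Mapping.keys y. \<exists>h h' I. cone P h \<and> cone P h' \<and> I \<in> poset_ideals P \<and> k = h + smul q (h' + eI I)"
  using assms(1) unfolding frobenius_power_def
proof (induction y rule: ideal_gen.induct)
  case zero then show ?case by simp
next
  case (step r s f)
  obtain x where x: "x \<in> hibi_max P" "s = x ^ q" using step(2) by blast
  have "\<forall>k\<in>Poly_Mapping.keys (r * s). \<exists>h h' I. cone P h \<and> cone P h' \<and> I \<in> poset_ideals P \<and> k = h + smul q (h' + eI I)"
  proof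
    fix k assume "k \<in> Poly_Mapping.keys (r * s)"
    then obtain a b where "k = a + b" "a \<in> Poly_Mapping.keys r" "b \<in> Poly_Mapping.keys s" using keys_mult[of r s] by blast
    then obtain c where "c \<in> Poly_Mapping.keys x" "b = smul q c" using frob_keys[OF assms(3,4), of x] x by auto
    then obtain h' I where "cone P h'" "I \<in> poset_ideals P" "c = h' + eI I"
      using keys_max[OF x(1) assms(2)] unfolding Kp_def by blast
    moreover have "cone P a" using keys_ring[OF step(1) assms(2)] \<open>a \<in> Poly_Mapping.keys r\<close> by blast
    ultimately show "\<exists>h h' I. cone P h \<and> cone P h' \<and> I \<in> poset_ideals P \<and> k = h + smul q (h' + eI I)"
      using \<open>k = a + b\<close> \<open>b = smul q c\<close> by blast
  qed
  then show ?case using step(4) keys_add[of "r*s" f] by blast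
qed


lemma finite_poset_ideals: "finite P \<Longrightarrow> finite (poset_ideals P)"
  by (rule finite_subset[of _ "Pow P"]) (auto simp: poset_ideals_def)

lemma finite_hibi_gens: "finite P \<Longrightarrow> finite (hibi_gens P)"
  by (simp add: hibi_gens_def finite_poset_ideals)

lemma gens_in_ring: "g \<in> hibi_gens P \<Longrightarrow> g \<in> hibi_ring P"
  by (rule hibi_ring.gen)

lemma gens_in_max: "g \<in> hibi_gens P \<Longrightarrow> (g :: ('a::order,'k::field) mpoly) \<in> hibi_max P"
  unfolding hibi_max_def by (rule ideal_gen_base[OF _ hibi_ring_one])

lemma max_in_ring: "x \<in> hibi_max P \<Longrightarrow> (x :: ('a::order,'k::field) mpoly) \<in> hibi_ring P"
  unfolding hibi_max_def
proof (induction x rule: ideal_gen.induct)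
  case zero then show ?case using hibi_ring.const[of 0 P] by simp
next
  case (step r s f) then show ?case by (simp add: hibi_ring.add hibi_ring.mult hibi_ring.gen)
qed

lemma prod_list_in_ring: "set xs \<subseteq> hibi_ring P \<Longrightarrow> prod_list xs \<in> (hibi_ring P :: ('a::order,'k::field) mpoly set)"
  by (induction xs) (auto simp: hibi_ring_one hibi_ring.mult)

lemma ideal_gen_subset: "S \<subseteq> T \<Longrightarrow> ideal_gen R S \<subseteq> ideal_gen R T"
proof
  fix x assume ST: "S \<subseteq> T" and "x \<in> ideal_gen R S"
  from this(2) show "x \<in> ideal_gen R T"
    by (induction x rule: ideal_gen.induct) (use ST in \<open>auto intro: ideal_gen.intros\<close>)
qed

lemma prod_list_max:
  fixes xs :: "('a::order,'k::field) mpoly list"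
  assumes "set xs \<subseteq> hibi_max P"
  shows "prod_list xs \<in> ideal_gen (hibi_ring P) {prod_list gs | gs. length gs = length xs \<and> set gs \<subseteq> hibi_gens P}"
  using assms
proof (induction xs)
  case Nil
  have "prod_list [] \<in> {prod_list gs | gs. length gs = length ([]::('a,'k) mpoly list) \<and> set gs \<subseteq> hibi_gens P}"
    by auto
  moreover have "(1::('a,'k) mpoly) \<in> ideal_gen (hibi_ring P) {1}" by (rule ideal_gen_base) (auto simp: hibi_ring_one)
  ultimately show ?case by simp
next
  case (Cons x xs)
  have x: "x \<in> ideal_gen (hibi_ring P) (hibi_gens P)" using Cons(2) by (simp add: hibi_max_def)
  have ih: "prod_list xs \<in> ideal_gen (hibi_ring P) {prod_list gs | gs. length gs = length xs \<and> set gs \<subseteq> hibi_gens P}"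
    using Cons by simp
  have mem: "x * prod_list xs \<in> ideal_gen (hibi_ring P)
      {s * t | s t. s \<in> hibi_gens P \<and> t \<in> {prod_list gs | gs. length gs = length xs \<and> set gs \<subseteq> hibi_gens P}}"
    by (rule ideal_gen_prod[OF x ih hibi_ring_mult hibi_ring_one])
  have sub: "{s * t | s t. s \<in> hibi_gens P \<and> t \<in> {prod_list gs | gs. length gs = length xs \<and> set gs \<subseteq> hibi_gens P}}
     \<subseteq> {prod_list gs | gs. length gs = length (x # xs) \<and> set gs \<subseteq> (hibi_gens P :: ('a,'k) mpoly set)}"
  proof
    fix y assume "y \<in> {s * t | s t. s \<in> hibi_gens P \<and> t \<in> {prod_list gs | gs. length gs = length xs \<and> set gs \<subseteq> (hibi_gens P :: ('a,'k) mpoly set)}}"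
    then obtain s gs where h: "y = s * prod_list gs" "s \<in> hibi_gens P" "length gs = length xs" "set gs \<subseteq> hibi_gens P" by blast
    then have "y = prod_list (s # gs) \<and> length (s # gs) = length (x # xs) \<and> set (s # gs) \<subseteq> hibi_gens P" by simp
    then show "y \<in> {prod_list gs | gs. length gs = length (x # xs) \<and> set gs \<subseteq> hibi_gens P}"
      by blast
  qed
  have "x * prod_list xs \<in> ideal_gen (hibi_ring P) {prod_list gs | gs. length gs = length (x # xs) \<and> set gs \<subseteq> hibi_gens P}"
    by (rule subsetD[OF ideal_gen_subset[OF sub] mem])
  then show ?case by simp
qed

lemma extract_power:
  fixes gs :: "'r::comm_monoid_mult list"
  assumes "q \<le> count_list gs g"
  shows "\<exists>rest. set rest \<subseteq> set gs \<and> prod_list gs = g ^ q * prod_list rest"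
  using assms
proof (induction gs arbitrary: q)
  case Nil then show ?case by (intro exI[of _ "[]"]) simp
next
  case (Cons a gs)
  show ?case
  proof (cases "q = 0")
    case True then show ?thesis by (intro exI[of _ "a # gs"]) simp
  next
    case False
    show ?thesis
    proof (cases "a = g")
      case True
      then have "q - 1 \<le> count_list gs g" using Cons(2) by simp
      then obtain rest where "set rest \<subseteq> set gs" "prod_list gs = g ^ (q - 1) * prod_list rest"
        using Cons.IH by blast
      moreover have "g * g ^ (q - 1) = g ^ q" using False by (metis power_eq_if)
      ultimately show ?thesis using True by (intro exI[of _ rest]) (auto simp flip: mult.assoc)
    next
      case False
      then have "q \<le> count_list gs g" using Cons(2) by simp
      then obtain rest where "set rest \<subseteq> set gs" "prod_list gs = g ^ q * prod_list rest"
        using Cons.IH by blast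
      then show ?thesis by (intro exI[of _ "a # rest"]) (auto simp: mult.left_commute)
    qed
  qed
qed

lemma pigeon:
  assumes "set gs \<subseteq> G" "finite G" "card G * (q - 1) < length gs"
  shows "\<exists>g\<in>G. q \<le> count_list gs g"
proof (rule ccontr)
  assume "\<not> ?thesis"
  then have "\<forall>g\<in>G. count_list gs g \<le> q - 1" by auto
  then have "sum (count_list gs) G \<le> sum (\<lambda>_. q - 1) G" by (intro sum_mono) auto
  then have "length gs \<le> card G * (q - 1)" using sum_count_set[OF assms(1,2)] by simp
  then show False using assms(3) by simp
qed

lemma big_power_in_frob:
  fixes gs :: "('a::order,'k::field) mpoly list"
  assumes "finite P" "set gs \<subseteq> hibi_gens P" "card (hibi_gens P :: ('a,'k) mpoly set) * (q - 1) < length gs"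
  shows "prod_list gs \<in> frobenius_power (hibi_ring P) (hibi_max P) q"
proof -
  obtain g where g: "g \<in> hibi_gens P" "q \<le> count_list gs g"
    using pigeon[OF assms(2) finite_hibi_gens[OF assms(1)] assms(3)] by blast
  obtain rest where r: "set rest \<subseteq> set gs" "prod_list gs = g ^ q * prod_list rest"
    using extract_power[OF g(2)] by blast
  have "prod_list rest \<in> hibi_ring P"
    using r(1) assms(2) by (intro prod_list_in_ring) (auto intro: gens_in_ring)
  moreover have "g ^ q \<in> {x ^ q | x. x \<in> hibi_max P}" using gens_in_max[OF g(1)] by blast
  ultimately have "prod_list rest * g ^ q + 0 \<in> frobenius_power (hibi_ring P) (hibi_max P) q"
    unfolding frobenius_power_def by (intro ideal_gen.step ideal_gen.zero)
  then show ?thesis using r(2) by (simp add: mult.commute)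
qed

lemma power_sub_frob:
  fixes P :: "'a::order set"
  assumes "finite P" "card (hibi_gens P :: ('a,'k::field) mpoly set) * (q - 1) < r"
  shows "ideal_power (hibi_ring P) (hibi_max P :: ('a,'k) mpoly set) r
          \<subseteq> frobenius_power (hibi_ring P) (hibi_max P) q"
proof
  let ?F = "frobenius_power (hibi_ring P) (hibi_max P :: ('a,'k) mpoly set) q"
  let ?G = "{prod_list gs | gs. length gs = r \<and> set gs \<subseteq> (hibi_gens P :: ('a,'k) mpoly set)}"
  have G: "?G \<subseteq> ?F"
  proof
    fix y assume "y \<in> ?G"
    then obtain gs where gs: "y = prod_list gs" "length gs = r" "set gs \<subseteq> (hibi_gens P :: ('a,'k) mpoly set)"
      by blast
    have "card (hibi_gens P :: ('a,'k) mpoly set) * (q - 1) < length gs" using gs(2) assms(2) by simp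
    from big_power_in_frob[OF assms(1) gs(3) this] gs(1) show "y \<in> ?F" by simp
  qed
  have "ideal_gen (hibi_ring P) ?G \<subseteq> ?F"
  proof
    fix y assume "y \<in> ideal_gen (hibi_ring P) ?G"
    from ideal_gen_mono[OF _ this hibi_ring_mult] G show "y \<in> ?F"
      unfolding frobenius_power_def by blast
  qed
  have S: "{prod_list xs | xs. length xs = r \<and> set xs \<subseteq> hibi_max P} \<subseteq> ?F"
  proof
    fix y assume "y \<in> {prod_list xs | xs. length xs = r \<and> set xs \<subseteq> (hibi_max P :: ('a,'k) mpoly set)}"
    then obtain xs where "y = prod_list xs" "length xs = r" "set xs \<subseteq> hibi_max P" by blast
    then have "y \<in> ideal_gen (hibi_ring P) ?G" using prod_list_max[of xs P] by simp
    then show "y \<in> ?F" using \<open>ideal_gen (hibi_ring P) ?G \<subseteq> ?F\<close> by (rule subsetD[rotated])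
  qed
  fix x assume "x \<in> ideal_power (hibi_ring P) (hibi_max P :: ('a,'k) mpoly set) r"
  then have X: "x \<in> ideal_gen (hibi_ring P) {prod_list xs | xs. length xs = r \<and> set xs \<subseteq> hibi_max P}"
    unfolding ideal_power_def .
  have S2: "{prod_list xs | xs. length xs = r \<and> set xs \<subseteq> hibi_max P}
      \<subseteq> ideal_gen (hibi_ring P) {y ^ q | y. y \<in> (hibi_max P :: ('a,'k) mpoly set)}"
    using S unfolding frobenius_power_def .
  show "x \<in> ?F"
    unfolding frobenius_power_def by (rule ideal_gen_mono[OF S2 X hibi_ring_mult])
qed

lemma nu_set_finite:
  assumes "finite P"
  shows "finite {r. \<not> (ideal_power (hibi_ring P) (hibi_max P :: ('a::order,'k::field) mpoly set) r
                           \<subseteq> frobenius_power (hibi_ring P) (hibi_max P) q)}"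
proof (rule finite_subset[of _ "{..card (hibi_gens P :: ('a,'k) mpoly set) * (q - 1)}"])
  show "{r. \<not> (ideal_power (hibi_ring P) (hibi_max P :: ('a::order,'k::field) mpoly set) r
                           \<subseteq> frobenius_power (hibi_ring P) (hibi_max P) q)}
     \<subseteq> {..card (hibi_gens P :: ('a,'k) mpoly set) * (q - 1)}"
  proof
    fix r assume "r \<in> {r. \<not> (ideal_power (hibi_ring P) (hibi_max P :: ('a::order,'k::field) mpoly set) r
                           \<subseteq> frobenius_power (hibi_ring P) (hibi_max P) q)}"
    then have nr: "\<not> (ideal_power (hibi_ring P) (hibi_max P :: ('a::order,'k::field) mpoly set) r
                           \<subseteq> frobenius_power (hibi_ring P) (hibi_max P) q)" by simp
    show "r \<in> {..card (hibi_gens P :: ('a,'k) mpoly set) * (q - 1)}"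
    proof (rule ccontr)
      assume "r \<notin> {..card (hibi_gens P :: ('a,'k) mpoly set) * (q - 1)}"
      then have "card (hibi_gens P :: ('a,'k) mpoly set) * (q - 1) < r" by simp
      from power_sub_frob[OF assms this] nr show False by blast
    qed
  qed
qed simp


lemma sorted_idx_card:
  fixes S :: "nat set"
  assumes "finite S" "k < card S"
  shows "card {y\<in>S. y < sorted_list_of_set S ! k} = k"
proof -
  let ?L = "sorted_list_of_set S"
  have ss: "sorted_wrt (<) ?L" by (simp add: strict_sorted_list_of_set)
  have len: "length ?L = card S" by simp
  have dist: "distinct ?L" by simp
  have setL: "set ?L = S" using assms(1) by simp
  have eq: "{y\<in>S. y < ?L ! k} = (\<lambda>i. ?L ! i) ` {..<k}"
  proof
    show "{y\<in>S. y < ?L ! k} \<subseteq> (\<lambda>i. ?L ! i) ` {..<k}"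
    proof
      fix y assume "y \<in> {y\<in>S. y < ?L ! k}"
      then have y: "y \<in> set ?L" "y < ?L ! k" using setL by auto
      then obtain i where i: "i < length ?L" "y = ?L ! i" by (metis in_set_conv_nth)
      have "i < k"
      proof (rule ccontr)
        assume "\<not> i < k"
        then have "k \<le> i" by simp
        then have "?L ! k \<le> ?L ! i"
          using ss i(1) by (metis le_less sorted_wrt_nth_less order.refl)
        then show False using y i by simp
      qed
      then show "y \<in> (\<lambda>i. ?L ! i) ` {..<k}" using i by auto
    qed
  next
    show "(\<lambda>i. ?L ! i) ` {..<k} \<subseteq> {y\<in>S. y < ?L ! k}"
    proof
      fix y assume "y \<in> (\<lambda>i. ?L ! i) ` {..<k}"
      then obtain i where i: "i < k" "y = ?L ! i" by auto
      have "?L ! i < ?L ! k" using ss i(1) assms(2) len by (metis sorted_wrt_nth_less)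
      moreover have "?L ! i \<in> S" using i(1) assms(2) len setL by (metis nth_mem order.strict_trans)
      ultimately show "y \<in> {y\<in>S. y < ?L ! k}" using i by simp
    qed
  qed
  have "inj_on (\<lambda>i. ?L ! i) {..<k}"
    using dist assms(2) len by (auto simp: inj_on_def nth_eq_iff_index_eq)
  then show ?thesis using eq card_image by fastforce
qed

lemma sorted_idx:
  fixes S :: "nat set"
  assumes "finite S" "x \<in> S"
  shows "sorted_list_of_set S ! card {y\<in>S. y < x} = x"
proof -
  let ?L = "sorted_list_of_set S"
  obtain k where k: "k < length ?L" "x = ?L ! k" using assms by (metis in_set_conv_nth set_sorted_list_of_set)
  have "card {y\<in>S. y < x} = k" using sorted_idx_card[OF assms(1), of k] k by simp
  then show ?thesis using k by simp
qed

lemma card_less_Suc: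
  "card {y::nat. Q y \<and> y < Suc x} = card {y. Q y \<and> y < x} + (if Q x then 1 else 0)"
proof -
  have fin: "finite {y. Q y \<and> y < x}" by (rule finite_subset[of _ "{..<x}"]) auto
  show ?thesis
  proof (cases "Q x")
    case True
    then have "{y. Q y \<and> y < Suc x} = insert x {y. Q y \<and> y < x}" by auto
    then show ?thesis using True fin by simp
  next
    case False
    then have "{y. Q y \<and> y < Suc x} = {y. Q y \<and> y < x}" using less_Suc_eq by auto
    then show ?thesis using False by simp
  qed
qed

lemma last_before:
  assumes "Q (k::nat)" "k < i"
  shows "\<exists>u. k \<le> u \<and> u < i \<and> Q u \<and> (\<forall>m. u < m \<and> m < i \<longrightarrow> \<not> Q m)"
proof -
  let ?S = "{m. k \<le> m \<and> m < i \<and> Q m}"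
  have fin: "finite ?S" by (rule finite_subset[of _ "{..<i}"]) auto
  have ne: "k \<in> ?S" using assms by simp
  let ?u = "Max ?S"
  have "?u \<in> ?S" using fin ne Max_in by blast
  moreover have "\<forall>m. ?u < m \<and> m < i \<longrightarrow> \<not> Q m"
    using fin ne Max_ge ne by (metis (mono_tags, lifting) CollectI le_trans less_imp_le_nat not_le calculation)
  ultimately show ?thesis by blast
qed

lemma first_after:
  assumes "Q (k::nat)" "i \<le> k"
  shows "\<exists>w. i \<le> w \<and> w \<le> k \<and> Q w \<and> (\<forall>m. i \<le> m \<and> m < w \<longrightarrow> \<not> Q m)"
proof -
  let ?w = "LEAST m. i \<le> m \<and> Q m"
  have h: "i \<le> ?w \<and> Q ?w" using assms by (metis (mono_tags, lifting) LeastI)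
  have "?w \<le> k" using assms by (simp add: Least_le)
  moreover have "\<forall>m. i \<le> m \<and> m < ?w \<longrightarrow> \<not> Q m" using not_less_Least by blast
  ultimately show ?thesis using h by blast
qed

locale mpath =
  fixes P :: "'a::order set" and xs :: "'a list"
  assumes fin: "finite P" and mp: "is_maximal_path P xs" and sc: "star_cond P xs"
    and len2: "2 \<le> length xs"
begin

definition up :: "nat \<Rightarrow> bool" where "up i \<longleftrightarrow> covers P (xs ! i) (xs ! Suc i)"
definition dn :: "nat \<Rightarrow> bool" where "dn i \<longleftrightarrow> covers P (xs ! Suc i) (xs ! i)"

lemma path: "is_path P xs" using mp by (simp add: is_maximal_path_def)

lemma inP: "i < length xs \<Longrightarrow> xs ! i \<in> P"
  using path by (auto simp: is_path_def)

lemma step: "Suc i < length xs \<Longrightarrow> up i \<or> dn i"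
  using path by (auto simp: is_path_def up_def dn_def)

lemma not_both: "up i \<Longrightarrow> \<not> dn i"
  by (auto simp: up_def dn_def covers_def)

lemma up_le: "up i \<Longrightarrow> xs ! i \<le> xs ! Suc i" by (auto simp: up_def covers_def)
lemma dn_le: "dn i \<Longrightarrow> xs ! Suc i \<le> xs ! i" by (auto simp: dn_def covers_def)

lemma up0: "up 0"
proof -
  have "minimal_in P (hd xs)" using path by (simp add: is_path_def)
  moreover have "hd xs = xs ! 0" using len2 by (cases xs) auto
  ultimately have "\<not> dn 0" by (auto simp: dn_def covers_def minimal_in_def)
  then show ?thesis using step[of 0] len2 by auto
qed

lemma uplast: "up (length xs - 2)"
proof -
  have "covers P (xs ! (length xs - 2)) (xs ! (length xs - 1))" using path len2 by (simp add: is_path_def)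
  moreover have "Suc (length xs - 2) = length xs - 1" using len2 by simp
  ultimately show ?thesis by (simp add: up_def)
qed

lemma not_up_dn: "Suc i < length xs \<Longrightarrow> \<not> up i \<Longrightarrow> dn i" using step by blast

lemma peak_iff: "loc_max P xs i \<longleftrightarrow> i = length xs - 1 \<or> (0 < i \<and> Suc i < length xs \<and> up (i - 1) \<and> dn i)"
proof -
  have "0 < i \<Longrightarrow> Suc (i - 1) = i" by simp
  then show ?thesis using len2 unfolding loc_max_def up_def dn_def
    by (cases "i = 0") auto
qed

lemma valley_iff: "loc_min P xs i \<longleftrightarrow> i = 0 \<or> (0 < i \<and> Suc i < length xs \<and> dn (i - 1) \<and> up i)"
proof -
  have "0 < i \<Longrightarrow> Suc (i - 1) = i" by simp
  then show ?thesis using len2 unfolding loc_min_def up_def dn_def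
    by (cases "i = 0") auto
qed

definition PC :: "nat \<Rightarrow> nat" where "PC x = card {y. loc_max P xs y \<and> y < x}"
definition VC :: "nat \<Rightarrow> nat" where "VC x = card {y. loc_min P xs y \<and> y < x}"

lemma fin_peaks: "finite {y. loc_max P xs y}"
  by (rule finite_subset[of _ "{..<length xs}"]) (auto simp: loc_max_def)
lemma fin_valleys: "finite {y. loc_min P xs y}"
  by (rule finite_subset[of _ "{..<length xs}"]) (auto simp: loc_min_def)

lemma len_lmax: "length (lmax_pos P xs) = card {y. loc_max P xs y}"
  by (simp add: lmax_pos_def)
lemma len_lmin: "length (lmin_pos P xs) = card {y. loc_min P xs y}"
  by (simp add: lmin_pos_def)

lemma Mx_idx: "loc_max P xs y \<Longrightarrow> lmax_pos P xs ! PC y = y"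
  using sorted_idx[OF fin_peaks, of y] by (simp add: lmax_pos_def PC_def)
lemma Mn_idx: "loc_min P xs y \<Longrightarrow> lmin_pos P xs ! VC y = y"
  using sorted_idx[OF fin_valleys, of y] by (simp add: lmin_pos_def VC_def)

lemma Mn_nth: assumes "k < length (lmin_pos P xs)"
  shows "loc_min P xs (lmin_pos P xs ! k) \<and> VC (lmin_pos P xs ! k) = k"
proof
  have "lmin_pos P xs ! k \<in> set (lmin_pos P xs)" using assms by simp
  then show "loc_min P xs (lmin_pos P xs ! k)" using fin_valleys by (simp add: lmin_pos_def)
  show "VC (lmin_pos P xs ! k) = k"
    using sorted_idx_card[OF fin_valleys, of k] assms by (simp add: VC_def lmin_pos_def len_lmin)
qed

lemma PC_mono_strict: assumes "loc_max P xs q" "q < y" shows "PC q < PC y"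
proof -
  have "{z. loc_max P xs z \<and> z < q} \<subset> {z. loc_max P xs z \<and> z < y}" using assms by auto
  moreover have "finite {z. loc_max P xs z \<and> z < y}" by (rule finite_subset[OF _ fin_peaks]) auto
  ultimately show ?thesis unfolding PC_def by (rule psubset_card_mono[rotated])
qed

lemma PC_less_card: assumes "loc_max P xs q" shows "PC q < card {y. loc_max P xs y}"
proof -
  have "{z. loc_max P xs z \<and> z < q} \<subset> {z. loc_max P xs z}" using assms by auto
  then show ?thesis unfolding PC_def by (rule psubset_card_mono[OF fin_peaks])
qed

lemma VC_le_card: "VC x \<le> card {y. loc_min P xs y}"
  unfolding VC_def by (rule card_mono[OF fin_valleys]) auto

lemma counting: "x < length xs \<Longrightarrow> VC x = PC x + (if 0 < x \<and> up (x - 1) then 1 else 0)"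
proof (induction x)
  case 0 then show ?case by (simp add: VC_def PC_def)
next
  case (Suc x)
  have IH: "VC x = PC x + (if 0 < x \<and> up (x - 1) then 1 else 0)" using Suc by simp
  have sx: "Suc x < length xs" using Suc by simp
  have V: "VC (Suc x) = VC x + (if loc_min P xs x then 1 else 0)"
    unfolding VC_def by (rule card_less_Suc)
  have Pk: "PC (Suc x) = PC x + (if loc_max P xs x then 1 else 0)"
    unfolding PC_def by (rule card_less_Suc)
  have vx: "loc_min P xs x \<longleftrightarrow> x = 0 \<or> (0 < x \<and> dn (x - 1) \<and> up x)" using valley_iff sx by auto
  have px: "loc_max P xs x \<longleftrightarrow> 0 < x \<and> up (x - 1) \<and> dn x" using peak_iff sx by auto
  have ud: "up x \<longleftrightarrow> \<not> dn x" using step[OF sx] not_both by blast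
  show ?case
  proof (cases "x = 0")
    case True then show ?thesis using IH V Pk vx px up0 ud by simp
  next
    case False
    have "Suc (x - 1) < length xs" using sx by simp
    then have ud': "up (x - 1) \<longleftrightarrow> \<not> dn (x - 1)" using step[of "x - 1"] not_both by blast
    show ?thesis using False IH V Pk vx px ud ud' by auto
  qed
qed

lemma up_chain: "a \<le> b \<Longrightarrow> b < length xs \<Longrightarrow> (\<forall>m. a \<le> m \<and> m < b \<longrightarrow> up m) \<Longrightarrow> xs ! a \<le> xs ! b"
proof (induction b)
  case 0 then show ?case by simp
next
  case (Suc b)
  show ?case
  proof (cases "a = Suc b")
    case True then show ?thesis by simp
  next
    case False
    then have "xs ! a \<le> xs ! b" using Suc by simp
    moreover have "up b" using Suc False by simp
    ultimately show ?thesis using up_le order_trans by blast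
  qed
qed

lemma dn_chain: "a \<le> b \<Longrightarrow> b < length xs \<Longrightarrow> (\<forall>m. a \<le> m \<and> m < b \<longrightarrow> dn m) \<Longrightarrow> xs ! b \<le> xs ! a"
proof (induction b)
  case 0 then show ?case by simp
next
  case (Suc b)
  show ?case
  proof (cases "a = Suc b")
    case True then show ?thesis by simp
  next
    case False
    then have "xs ! b \<le> xs ! a" using Suc by simp
    moreover have "dn b" using Suc False by simp
    ultimately show ?thesis using dn_le order_trans by blast
  qed
qed

lemma BP:
  assumes "j \<le> V" "0 < V" "V < length xs" "\<not> up (V - 1)"
  shows "\<exists>Q. loc_max P xs Q \<and> Q < V \<and> xs ! j \<le> xs ! Q"
proof (cases "j < V \<and> up j")
  case True
  have "\<not> up (V - 1)" using assms by simp
  then obtain c where c: "j \<le> c" "c \<le> V - 1" "\<not> up c" "\<forall>m. j \<le> m \<and> m < c \<longrightarrow> \<not> \<not> up m"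
    using first_after[of "\<lambda>m. \<not> up m" "V - 1" j, OF \<open>\<not> up (V - 1)\<close>] True by force
  have "c \<noteq> j" using c True by auto
  then have cj: "j < c" using c by simp
  have sc: "Suc c < length xs" using c assms by simp
  have "up (c - 1)" using c cj by simp
  moreover have "dn c" using not_up_dn[OF sc c(3)] .
  ultimately have "loc_max P xs c" using peak_iff cj sc by auto
  moreover have "xs ! j \<le> xs ! c" using up_chain[of j c] c sc by auto
  ultimately show ?thesis using c assms by (intro exI[of _ c]) auto
next
  case False
  have j0: "0 < j"
  proof (rule ccontr)
    assume "\<not> 0 < j"
    then have "j = 0" by simp
    then show False using False up0 assms by simp
  qed
  obtain u where u: "u < j" "up u" "\<forall>m. u < m \<and> m < j \<longrightarrow> \<not> up m"
    using last_before[of up 0 j] up0 j0 by auto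
  have sj: "Suc j < length xs \<or> j = V"
    using assms False by auto
  have Qlt: "Suc u < V"
  proof -
    have "Suc u \<le> j" using u by simp
    moreover have "Suc u \<noteq> V" using u assms by auto
    ultimately show ?thesis using assms(1) by simp
  qed
  have "\<not> up (Suc u)"
  proof (cases "Suc u < j")
    case True then show ?thesis using u by simp
  next
    case False
    then have "Suc u = j" using u by simp
    then show ?thesis using \<open>\<not> (j < V \<and> up j)\<close> Qlt by auto
  qed
  then have "dn (Suc u)" using not_up_dn Qlt assms by simp
  then have "loc_max P xs (Suc u)" using peak_iff u Qlt assms by auto
  moreover have "xs ! j \<le> xs ! Suc u"
  proof (rule dn_chain)
    show "Suc u \<le> j" using u by simp
    show "j < length xs" using assms by simp
    show "\<forall>m. Suc u \<le> m \<and> m < j \<longrightarrow> dn m"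
      using u not_up_dn assms by auto
  qed
  ultimately show ?thesis using Qlt by blast
qed

lemma angA_mem:
  assumes "loc_max P xs Q" "z \<in> P" "z \<le> xs ! Q"
  shows "z \<in> angA P xs (PC Q)"
  using assms Mx_idx[OF assms(1)] by (simp add: angA_def tA_def down_set_def)

lemma star1:
  assumes "Suc s < length (lmax_pos P xs)"
  shows "(\<lambda>j. xs ! j) ` D_pos P xs s \<inter>
           ((\<Union>l<s. angA P xs l) \<union>
            down_set P ((\<lambda>j. xs ! j) ` (A_pos P xs s - {lmax_pos P xs ! s})) \<union>
            {tA P xs s}) = {}"
  using sc assms unfolding star_cond_def by blast

lemma star2:
  assumes "Suc s < length (lmax_pos P xs)"
  shows "(\<lambda>j. xs ! j) ` A_pos P xs (Suc s) \<inter> (\<Union>l\<le>s. angA P xs l) = {}"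
  using sc assms unfolding star_cond_def by blast

end


context mpath begin

lemma key_caseA:
  assumes ji: "j < i" and it: "i < length xs" and lt: "xs ! i < xs ! j" and upi: "up (i - 1)" and i0: "0 < i"
  shows False
proof -
  have ilast: "i - 1 < length xs - 1" using it i0 by simp
  obtain V where V: "loc_min P xs V" "V < i" "\<forall>m. V \<le> m \<and> m < i \<longrightarrow> up m" "0 < V \<longrightarrow> \<not> up (V - 1)"
  proof (cases "\<exists>d. d < i - 1 \<and> \<not> up d")
    case True
    then obtain d where d: "d < i - 1" "\<not> up d" by blast
    obtain u where u: "d \<le> u" "u < i - 1" "\<not> up u" "\<forall>m. u < m \<and> m < i - 1 \<longrightarrow> \<not> \<not> up m"
      using last_before[of "\<lambda>m. \<not> up m" d "i - 1", OF d(2) d(1)] by blast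
    have all: "\<forall>m. Suc u \<le> m \<and> m < i \<longrightarrow> up m"
    proof (intro allI impI)
      fix m assume "Suc u \<le> m \<and> m < i"
      then show "up m" using u upi by (cases "m = i - 1") auto
    qed
    have su: "Suc (Suc u) < length xs" using u it by simp
    have "dn u" using not_up_dn[of u] u su by simp
    moreover have "up (Suc u)" using all u by simp
    ultimately have "loc_min P xs (Suc u)" using valley_iff su by auto
    then show ?thesis using that[of "Suc u"] all u by auto
  next
    case False
    then have all: "\<forall>m. 0 \<le> m \<and> m < i \<longrightarrow> up m" using upi by (metis le0 less_diff_conv2 not_less_eq less_one not_less_iff_gr_or_eq nat_neq_iff Suc_pred i0 Suc_le_eq le_simps(3))
    have "loc_min P xs 0" using valley_iff by simp
    then show ?thesis using that[of 0] all i0 by auto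
  qed
  obtain Pk where Pk: "loc_max P xs Pk" "i \<le> Pk" "Pk < length xs" "\<forall>m. i \<le> m \<and> m < Pk \<longrightarrow> up m"
  proof (cases "\<exists>m. i \<le> m \<and> Suc m < length xs \<and> \<not> up m")
    case True
    then obtain m0 where m0: "i \<le> m0" "Suc m0 < length xs \<and> \<not> up m0" by blast
    obtain w where w: "i \<le> w" "w \<le> m0" "Suc w < length xs \<and> \<not> up w"
      "\<forall>m. i \<le> m \<and> m < w \<longrightarrow> \<not> (Suc m < length xs \<and> \<not> up m)"
      using first_after[of "\<lambda>m. Suc m < length xs \<and> \<not> up m" m0 i, OF m0(2) m0(1)] by blast
    have allw: "\<forall>m. i \<le> m \<and> m < w \<longrightarrow> up m" using w by auto
    have "up (w - 1)"
    proof (cases "w = i")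
      case True then show ?thesis using upi by simp
    next
      case False then show ?thesis using allw w by simp
    qed
    moreover have "dn w" using not_up_dn w by blast
    ultimately have "loc_max P xs w" using peak_iff w i0 by auto
    then show ?thesis using that[of w] w allw by auto
  next
    case False
    have "loc_max P xs (length xs - 1)" using peak_iff by simp
    moreover have "\<forall>m. i \<le> m \<and> m < length xs - 1 \<longrightarrow> up m" using False by auto
    ultimately show ?thesis using that[of "length xs - 1"] it by auto
  qed
  have allVP: "\<forall>m. V \<le> m \<and> m < Pk \<longrightarrow> up m" using V(3) Pk(4) by (meson not_le)
  define s where "s = PC Pk"
  have Mxs: "lmax_pos P xs ! s = Pk" using Mx_idx[OF Pk(1)] s_def by simp
  have PCeq: "PC V = s"
  proof -
    have "{y. loc_max P xs y \<and> y < Pk} = {y. loc_max P xs y \<and> y < V}"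
    proof (intro set_eqI iffI)
      fix y assume y: "y \<in> {y. loc_max P xs y \<and> y < Pk}"
      show "y \<in> {y. loc_max P xs y \<and> y < V}"
      proof (rule ccontr)
        assume "y \<notin> {y. loc_max P xs y \<and> y < V}"
        then have "V \<le> y" using y by auto
        then have "up y" using allVP y by auto
        moreover have "y \<noteq> length xs - 1" using y Pk by auto
        moreover have "loc_max P xs y" using y by simp
        ultimately show False unfolding peak_iff using not_both by blast
      qed
    next
      fix y assume "y \<in> {y. loc_max P xs y \<and> y < V}"
      then show "y \<in> {y. loc_max P xs y \<and> y < Pk}" using V Pk by auto
    qed
    then show ?thesis by (simp add: PC_def s_def)
  qed
  have VCeq: "VC V = s"
  proof -
    have "V < length xs" using V it by simp
    from counting[OF this] V(4) PCeq show ?thesis by auto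
  qed
  have Mns: "lmin_pos P xs ! s = V" using Mn_idx[OF V(1)] VCeq by simp
  have iA: "i \<in> A_pos P xs s" unfolding A_pos_def using Mxs Mns Pk V by auto
  show False
  proof (cases "V \<le> j")
    case True
    have "xs ! j \<le> xs ! i" using up_chain[of j i] True V(3) ji it by auto
    then show False using lt by simp
  next
    case False
    then have V0: "0 < V" by simp
    obtain Q where Q: "loc_max P xs Q" "Q < V" "xs ! j \<le> xs ! Q"
      using BP[of j V] False V0 V it by auto
    have PCQ: "PC Q < s" using PC_mono_strict[OF Q(1,2)] PCeq by simp
    have s1: "Suc (s - 1) < length (lmax_pos P xs)"
      using PC_less_card[OF Pk(1)] len_lmax PCQ s_def by simp
    have "xs ! i \<in> angA P xs (PC Q)"
      using angA_mem[OF Q(1) inP[OF it]] lt Q(3) by simp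
    moreover have "xs ! i \<in> (\<lambda>j. xs ! j) ` A_pos P xs (Suc (s - 1))" using iA PCQ by simp
    moreover have "PC Q \<le> s - 1" using PCQ by simp
    ultimately show False using star2[OF s1] by blast
  qed
qed

lemma key_caseB:
  assumes ji: "j < i" and it: "i < length xs" and lt: "xs ! i < xs ! j" and nupi: "\<not> up (i - 1)" and i0: "0 < i"
    and k: "j \<le> k" "k < i" "up k"
  shows False
proof -
  have dni: "dn (i - 1)" using not_up_dn[of "i - 1"] nupi it i0 by simp
  have si: "Suc i < length xs"
  proof (rule ccontr)
    assume "\<not> Suc i < length xs"
    then have "i - 1 = length xs - 2" using it by simp
    then show False using uplast nupi by simp
  qed
  obtain u where u: "k \<le> u" "u < i" "up u" "\<forall>m. u < m \<and> m < i \<longrightarrow> \<not> up m"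
    using last_before[of up k i, OF k(3) k(2)] by blast
  have "u \<noteq> i - 1" using u nupi by auto
  then have ui: "Suc u < i" using u by linarith
  define Pk where "Pk = Suc u"
  have dnPk: "dn Pk" using not_up_dn[of Pk] u ui si Pk_def by simp
  have Pk: "loc_max P xs Pk" using peak_iff dnPk u ui si Pk_def by auto
  have il: "i \<le> length xs - 2" using si by linarith
  obtain w where w: "i \<le> w" "w \<le> length xs - 2" "up w" "\<forall>m. i \<le> m \<and> m < w \<longrightarrow> \<not> up m"
    using first_after[of up "length xs - 2" i, OF uplast il] by blast
  have nupPw: "\<forall>m. Pk \<le> m \<and> m < w \<longrightarrow> \<not> up m"
  proof (intro allI impI)
    fix m assume m: "Pk \<le> m \<and> m < w"
    show "\<not> up m"
    proof (cases "m < i")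
      case True then show ?thesis using u(4) m Pk_def by simp
    next
      case False then show ?thesis using w(4) m by simp
    qed
  qed
  have sw: "Suc w < length xs" using w len2 by simp
  have w0: "0 < w" using w i0 by simp
  have "dn (w - 1)" using not_up_dn[of "w - 1"] nupPw w0 sw Pk_def ui w by simp
  then have Vw: "loc_min P xs w" using valley_iff w0 sw w by auto
  define s where "s = PC Pk"
  have Mxs: "lmax_pos P xs ! s = Pk" using Mx_idx[OF Pk] s_def by simp
  have PCw: "PC w = Suc s"
  proof -
    have "{y. loc_max P xs y \<and> y < w} = insert Pk {y. loc_max P xs y \<and> y < Pk}"
    proof (intro set_eqI iffI)
      fix y assume y: "y \<in> {y. loc_max P xs y \<and> y < w}"
      show "y \<in> insert Pk {y. loc_max P xs y \<and> y < Pk}"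
      proof (rule ccontr)
        assume "y \<notin> insert Pk {y. loc_max P xs y \<and> y < Pk}"
        then have "Pk < y" using y by auto
        moreover have "y < w" using y by simp
        ultimately have "Pk \<le> y - 1 \<and> y - 1 < w" by linarith
        then have "\<not> up (y - 1)" by (rule nupPw[rule_format])
        moreover have "y \<noteq> length xs - 1" using y sw by auto
        moreover have "loc_max P xs y" using y by simp
        ultimately show False unfolding peak_iff by blast
      qed
    next
      fix y assume "y \<in> insert Pk {y. loc_max P xs y \<and> y < Pk}"
      then show "y \<in> {y. loc_max P xs y \<and> y < w}" using Pk Pk_def ui w by auto
    qed
    moreover have "finite {y. loc_max P xs y \<and> y < Pk}" by (rule finite_subset[OF _ fin_peaks]) auto
    ultimately show ?thesis by (simp add: PC_def s_def)
  qed
  have VCw: "VC w = Suc s"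
  proof -
    have "\<not> up (w - 1)" using \<open>dn (w - 1)\<close> not_both by blast
    then show ?thesis using counting[of w] sw PCw by simp
  qed
  have Mns1: "lmin_pos P xs ! Suc s = w" using Mn_idx[OF Vw] VCw by simp
  have s1: "Suc s < length (lmax_pos P xs)"
  proof -
    have "loc_max P xs (length xs - 1)" using peak_iff by simp
    moreover have "\<not> (length xs - 1 < w)" using sw by linarith
    then have "length xs - 1 \<notin> {y. loc_max P xs y \<and> y < w}" by simp
    ultimately have "{y. loc_max P xs y \<and> y < w} \<subset> {y. loc_max P xs y}" by blast
    then have "PC w < card {y. loc_max P xs y}" unfolding PC_def by (rule psubset_card_mono[OF fin_peaks])
    then show ?thesis using PCw len_lmax by simp
  qed
  have iD: "i \<in> D_pos P xs s" unfolding D_pos_def using Mxs Mns1 Pk_def ui w by auto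
  have jPk: "j < Pk" using k u Pk_def by simp
  show False
  proof (cases "s = 0 \<or> lmin_pos P xs ! s < j")
    case True
    then have "j \<in> A_pos P xs s - {lmax_pos P xs ! s}" unfolding A_pos_def using Mxs jPk by auto
    then have "xs ! i \<in> down_set P ((\<lambda>j. xs ! j) ` (A_pos P xs s - {lmax_pos P xs ! s}))"
      using inP[OF it] lt unfolding down_set_def by (auto intro!: bexI[of _ j] less_imp_le)
    moreover have "xs ! i \<in> (\<lambda>j. xs ! j) ` D_pos P xs s" using iD by (rule imageI)
    ultimately have "xs ! i \<in> (\<lambda>j. xs ! j) ` D_pos P xs s \<inter>
           ((\<Union>l<s. angA P xs l) \<union>
            down_set P ((\<lambda>j. xs ! j) ` (A_pos P xs s - {lmax_pos P xs ! s})) \<union>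
            {tA P xs s})" by blast
    then show False unfolding star1[OF s1] by simp
  next
    case False
    then have s0: "0 < s" and jV: "j \<le> lmin_pos P xs ! s" by auto
    define V where "V = lmin_pos P xs ! s"
    have slen: "s < length (lmin_pos P xs)" using VC_le_card[of w] VCw len_lmin by simp
    have VV: "loc_min P xs V" "VC V = s" using Mn_nth[OF slen] V_def by auto
    have V0: "0 < V"
    proof (rule ccontr)
      assume "\<not> 0 < V" then have "V = 0" by simp
      then show False using VV s0 by (simp add: VC_def)
    qed
    have Vt: "V < length xs" using VV by (simp add: loc_min_def)
    have dnV: "dn (V - 1)" using VV(1) valley_iff V0 by auto
    then have nupV: "\<not> up (V - 1)" using not_both by blast
    have PCV: "PC V = s" using counting[OF Vt] nupV VV(2) by simp
    have VPk: "V < Pk"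
    proof (rule ccontr)
      assume "\<not> V < Pk"
      moreover have "V \<noteq> Pk"
      proof
        assume "V = Pk"
        then have "dn (Pk - 1)" using dnV by simp
        moreover have "up (Pk - 1)" using u Pk_def by simp
        ultimately show False using not_both by blast
      qed
      ultimately have "Pk < V" by simp
      then have "PC Pk < PC V" using PC_mono_strict[OF Pk] by simp
      then show False using PCV s_def by simp
    qed
    obtain Q where Q: "loc_max P xs Q" "Q < V" "xs ! j \<le> xs ! Q"
      using BP[of j V] jV V_def V0 Vt nupV by auto
    have PCQ: "PC Q < s" using PC_mono_strict[OF Q(1,2)] PCV by simp
    have "xs ! i \<in> angA P xs (PC Q)"
      using angA_mem[OF Q(1) inP[OF it]] lt Q(3) by simp
    moreover have "xs ! i \<in> (\<lambda>j. xs ! j) ` D_pos P xs s" using iD by (rule imageI)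
    ultimately have "xs ! i \<in> (\<lambda>j. xs ! j) ` D_pos P xs s \<inter>
           ((\<Union>l<s. angA P xs l) \<union>
            down_set P ((\<lambda>j. xs ! j) ` (A_pos P xs s - {lmax_pos P xs ! s})) \<union>
            {tA P xs s})" using PCQ by blast
    then show False unfolding star1[OF s1] by simp
  qed
qed

lemma key:
  assumes "j < i" "i < length xs" "xs ! i < xs ! j" "j \<le> k" "k < i"
  shows "\<not> up k"
proof
  assume "up k"
  have i0: "0 < i" using assms by simp
  show False
  proof (cases "up (i - 1)")
    case True show False by (rule key_caseA[OF assms(1-3) True i0])
  next
    case False show False by (rule key_caseB[OF assms(1-3) False i0 assms(4,5) \<open>up k\<close>])
  qed
qed

end


definition cnt :: "'a::order set \<Rightarrow> 'a list \<Rightarrow> nat \<Rightarrow> nat" where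
  "cnt P xs j = card {i. i < j \<and> Suc i < length xs \<and> covers P (xs ! i) (xs ! Suc i)}"

definition fval :: "'a::order set \<Rightarrow> 'a list \<Rightarrow> 'a \<Rightarrow> nat" where
  "fval P xs p = Max ({1} \<union> {len_star P xs + 1 - cnt P xs j | j. j < length xs \<and> p \<le> xs ! j})"

lemma cnt_mono: "j \<le> j' \<Longrightarrow> cnt P xs j \<le> cnt P xs j'"
  unfolding cnt_def by (rule card_mono) (auto intro: finite_subset[of _ "{..<j'}"])

lemma cnt_le: "cnt P xs j \<le> len_star P xs"
  unfolding cnt_def len_star_def
  by (rule card_mono) (auto intro: finite_subset[of _ "{..<length xs}"])

lemma cnt_Suc: "cnt P xs (Suc i) = cnt P xs i + (if Suc i < length xs \<and> covers P (xs ! i) (xs ! Suc i) then 1 else 0)"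
proof -
  have "card {y. (Suc y < length xs \<and> covers P (xs ! y) (xs ! Suc y)) \<and> y < Suc i} =
    card {y. (Suc y < length xs \<and> covers P (xs ! y) (xs ! Suc y)) \<and> y < i} +
    (if Suc i < length xs \<and> covers P (xs ! i) (xs ! Suc i) then 1 else 0)"
    by (rule card_less_Suc)
  then show ?thesis unfolding cnt_def by (simp add: conj_commute conj_left_commute)
qed

lemma cnt_last: "cnt P xs (length xs - 1) = len_star P xs"
  unfolding cnt_def len_star_def by (rule arg_cong[where f=card]) auto

lemma cnt_eq_no_up:
  assumes "j \<le> i" "\<forall>m. j \<le> m \<and> m < i \<longrightarrow> \<not> covers P (xs ! m) (xs ! Suc m)"
  shows "cnt P xs i = cnt P xs j"
  unfolding cnt_def
proof (rule arg_cong[where f=card])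
  show "{ia. ia < i \<and> Suc ia < length xs \<and> covers P (xs ! ia) (xs ! Suc ia)} =
    {i. i < j \<and> Suc i < length xs \<and> covers P (xs ! i) (xs ! Suc i)}"
    using assms by (auto simp: not_le) (meson not_le)
qed

lemma key_gen:
  assumes fin: "finite P" and mp: "is_maximal_path P xs" and sc: "star_cond P xs"
    and ji: "j < i" and it: "i < length xs" and lt: "xs ! i < xs ! j"
  shows "cnt P xs i = cnt P xs j"
proof -
  have len2: "2 \<le> length xs" using ji it by simp
  interpret mpath P xs using fin mp sc len2 by unfold_locales
  show ?thesis
    using key[OF ji it lt] ji by (intro cnt_eq_no_up) (auto simp: up_def)
qed

context
  fixes P :: "'a::order set" and xs :: "'a list"
  assumes fin: "finite P" and mp: "is_maximal_path P xs" and sc: "star_cond P xs"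
begin

lemma pth: "is_path P xs" using mp by (simp add: is_maximal_path_def)

lemma fin_fset: "finite ({1} \<union> {len_star P xs + 1 - cnt P xs j | j. j < length xs \<and> p \<le> xs ! j})"
proof -
  have "{len_star P xs + 1 - cnt P xs j | j. j < length xs \<and> p \<le> xs ! j} \<subseteq>
      (\<lambda>j. len_star P xs + 1 - cnt P xs j) ` {..<length xs}" by auto
  then show ?thesis by (auto intro: finite_subset)
qed

lemma fval_ge: "j < length xs \<Longrightarrow> p \<le> xs ! j \<Longrightarrow> len_star P xs + 1 - cnt P xs j \<le> fval P xs p"
  unfolding fval_def by (rule Max_ge[OF fin_fset]) blast

lemma fval_ge1: "1 \<le> fval P xs p"
  unfolding fval_def by (rule Max_ge[OF fin_fset]) blast

lemma fval_le: "fval P xs p \<le> len_star P xs + 1"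
  unfolding fval_def using fin_fset by (subst Max_le_iff) auto

lemma fval_anti: "p \<le> p' \<Longrightarrow> fval P xs p' \<le> fval P xs p"
  unfolding fval_def
  by (rule Max_mono[OF _ _ fin_fset]) (auto intro: order_trans)

lemma fval_first: "fval P xs (xs ! 0) = len_star P xs + 1"
proof -
  have "0 < length xs" using pth by (simp add: is_path_def)
  then have "len_star P xs + 1 - cnt P xs 0 \<le> fval P xs (xs ! 0)" by (intro fval_ge) auto
  then show ?thesis using fval_le[of "xs ! 0"] by (simp add: cnt_def)
qed

lemma fval_last: "fval P xs (xs ! (length xs - 1)) = 1"
proof -
  have t0: "0 < length xs" using pth by (simp add: is_path_def)
  have lastmax: "maximal_in P (xs ! (length xs - 1))"
    using mp t0 by (simp add: is_maximal_path_def last_conv_nth)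
  have dist: "distinct xs" using pth by (simp add: is_path_def)
  have "fval P xs (xs ! (length xs - 1)) \<le> 1"
    unfolding fval_def
  proof (rule Max.boundedI[OF fin_fset])
    show "{1} \<union> {len_star P xs + 1 - cnt P xs j | j. j < length xs \<and> xs ! (length xs - 1) \<le> xs ! j} \<noteq> {}" by simp
    fix a assume a: "a \<in> {1} \<union> {len_star P xs + 1 - cnt P xs j | j. j < length xs \<and> xs ! (length xs - 1) \<le> xs ! j}"
    show "a \<le> 1"
    proof (cases "a = 1")
      case True then show ?thesis by simp
    next
      case False
    then obtain j where j: "a = len_star P xs + 1 - cnt P xs j" "j < length xs" "xs ! (length xs - 1) \<le> xs ! j" using a by auto
    have "xs ! j \<in> P" using pth j(2) by (auto simp: is_path_def)
    then have "xs ! (length xs - 1) = xs ! j" using lastmax j(3) by (auto simp: maximal_in_def order.order_iff_strict)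
    then have "j = length xs - 1" using dist j(2) t0 by (simp add: nth_eq_iff_index_eq)
    then show "a \<le> 1" using j(1) cnt_last[of P xs] by simp
    qed
  qed
  then show ?thesis using fval_ge1 by (simp add: antisym)
qed

lemma fval_step:
  assumes si: "Suc i < length xs" and c: "covers P (xs ! i) (xs ! Suc i)"
  shows "fval P xs (xs ! i) \<le> fval P xs (xs ! Suc i) + 1"
proof -
  have cS: "cnt P xs (Suc i) = Suc (cnt P xs i)" using cnt_Suc[of P xs i] si c by simp
  have b: "fval P xs (xs ! i) \<le> len_star P xs + 1 - cnt P xs i"
    unfolding fval_def
  proof (rule Max.boundedI[OF fin_fset])
    show "{1} \<union> {len_star P xs + 1 - cnt P xs j | j. j < length xs \<and> xs ! i \<le> xs ! j} \<noteq> {}" by simp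
    fix a assume a: "a \<in> {1} \<union> {len_star P xs + 1 - cnt P xs j | j. j < length xs \<and> xs ! i \<le> xs ! j}"
    show "a \<le> len_star P xs + 1 - cnt P xs i"
    proof (cases "a = 1")
      case True then show ?thesis using cnt_le[of P xs "Suc i"] cS by simp
    next
      case False
    then obtain j where j: "a = len_star P xs + 1 - cnt P xs j" "j < length xs" "xs ! i \<le> xs ! j" using a by auto
    show "a \<le> len_star P xs + 1 - cnt P xs i"
    proof (cases "i \<le> j")
      case True then show ?thesis using cnt_mono[OF True, of P xs] j(1) by simp
    next
      case False
      have "xs ! j \<noteq> xs ! i"
        using pth j(2) si False by (auto simp: is_path_def nth_eq_iff_index_eq)
      then have "xs ! i < xs ! j" using j(3) by simp
      then have "cnt P xs i = cnt P xs j" using key_gen[OF fin mp sc _ _] False si by simp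
      then show ?thesis using j(1) by simp
    qed
    qed
  qed
  have "len_star P xs + 1 - cnt P xs (Suc i) \<le> fval P xs (xs ! Suc i)" using fval_ge si by simp
  then show ?thesis using b cS cnt_le[of P xs "Suc i"] by simp
qed

end


lemma lookup_sum_list: "Poly_Mapping.lookup (sum_list xs) k = sum_list (map (\<lambda>x. Poly_Mapping.lookup x k) xs)"
  by (induction xs) (simp_all add: lookup_add)

lemma sum_list_concat': "sum_list (concat xss) = sum_list (map sum_list (xss :: nat list list))"
  by (induction xss) simp_all

lemma prod_hibi: "prod_list (map hibi_gen L) = (Poly_Mapping.single (sum_list (map eI L)) 1 :: ('a,'k::comm_ring_1) mpoly)"
  by (induction L) (simp_all add: hibi_gen_eI mult_single)

lemma cone_smul: "cone P h \<Longrightarrow> cone P (smul q h)"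
  unfolding cone_def lookup_smul by (meson mult_le_mono2)

definition Jset :: "'a::order set \<Rightarrow> 'a list \<Rightarrow> nat \<Rightarrow> 'a set" where
  "Jset P xs j = {p \<in> P. j \<le> fval P xs p}"

definition Lst :: "'a::order set \<Rightarrow> 'a list \<Rightarrow> nat \<Rightarrow> 'a set list" where
  "Lst P xs q = concat (map (\<lambda>j. replicate (q - 1) (Jset P xs j)) [1..<len_star P xs + 3])"

definition Wexp :: "'a::order set \<Rightarrow> 'a list \<Rightarrow> nat \<Rightarrow> ('a option \<Rightarrow>\<^sub>0 nat)" where
  "Wexp P xs q = sum_list (map eI (Lst P xs q))"

lemma len_Lst: "length (Lst P xs q) = (len_star P xs + 2) * (q - 1)"
  by (simp add: Lst_def length_concat comp_def sum_list_triv)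

lemma set_Lst: "set (Lst P xs q) \<subseteq> {Jset P xs j | j. True}"
  by (auto simp: Lst_def)

lemma count_sum: assumes "f \<le> u + 1"
  shows "sum_list (map (\<lambda>j. (c::nat) * (if j \<le> f then 1 else 0)) [1..<u + 3]) = c * f"
proof -
  have "sum_list (map (\<lambda>j. c * (if j \<le> f then 1 else 0)) [1..<u + 3]) =
      (\<Sum>j\<in>{1..<u+3}. c * (if j \<le> f then 1 else 0))"
    by (subst sum_set_upt_conv_sum_list_nat[symmetric]) simp
  also have "\<dots> = (\<Sum>j\<in>{1..<u+3}. if j \<le> f then c else 0)" by (intro sum.cong) auto
  also have "\<dots> = (\<Sum>j\<in>{1..<u+3} \<inter> {j. j \<le> f}. c)" by (simp add: sum.If_cases)
  also have "{1..<u+3} \<inter> {j. j \<le> f} = {1..f}" using assms by auto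
  finally show ?thesis by simp
qed

context
  fixes P :: "'a::order set" and xs :: "'a list"
  assumes fin: "finite P" and mp: "is_maximal_path P xs" and sc: "star_cond P xs"
begin

lemma Jset_ideal: "Jset P xs j \<in> poset_ideals P"
  unfolding Jset_def poset_ideals_def using fval_anti[OF fin mp sc] order_trans by blast

lemma Jset_fin: "finite (Jset P xs j)"
  using fin by (auto simp: Jset_def)

lemma W_None: "Poly_Mapping.lookup (Wexp P xs q) None = (len_star P xs + 2) * (q - 1)"
proof -
  have "Poly_Mapping.lookup (Wexp P xs q) None = sum_list (map (\<lambda>I. 1) (Lst P xs q))"
    unfolding Wexp_def lookup_sum_list by (simp add: comp_def lookup_eI_None)
  then show ?thesis by (simp add: sum_list_triv len_Lst)
qed

lemma W_Some: assumes "p \<in> P" shows "Poly_Mapping.lookup (Wexp P xs q) (Some p) = (q - 1) * fval P xs p"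
proof -
  have "Poly_Mapping.lookup (Wexp P xs q) (Some p) = sum_list (map (\<lambda>I. if p \<in> I then 1 else 0) (Lst P xs q))"
    unfolding Wexp_def lookup_sum_list map_map comp_def
    by (rule arg_cong[where f=sum_list], rule map_cong[OF refl])
       (use set_Lst[of P xs q] Jset_fin in \<open>auto simp: lookup_eI_Some\<close>)
  also have "\<dots> = sum_list (map (\<lambda>j. (q - 1) * (if j \<le> fval P xs p then 1 else 0)) [1..<len_star P xs + 3])"
    using assms by (simp add: Lst_def map_concat sum_list_concat' comp_def sum_list_triv Jset_def sum_list_replicate)
  also have "\<dots> = (q - 1) * fval P xs p"
    by (rule count_sum[OF fval_le[OF fin mp sc]])
  finally show ?thesis .
qed

lemma W_nonmem:
  assumes q0: "0 < q"
  shows "\<not> (\<exists>h h' I. cone P h \<and> cone P h' \<and> I \<in> poset_ideals P \<and> Wexp P xs q = h + smul q (h' + eI I))"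
proof
  assume "\<exists>h h' I. cone P h \<and> cone P h' \<and> I \<in> poset_ideals P \<and> Wexp P xs q = h + smul q (h' + eI I)"
  then obtain h h' I where hh: "cone P h" "cone P h'" "I \<in> poset_ideals P" "Wexp P xs q = h + smul q (h' + eI I)"
    by blast
  define z where "z = h + smul q h'"
  have cz: "cone P z" unfolding z_def by (rule cone_add[OF hh(1) cone_smul[OF hh(2)]])
  have IP: "I \<subseteq> P" using hh(3) by (simp add: poset_ideals_def)
  have fI: "finite I" using IP fin by (rule finite_subset)
  have Wk: "\<And>k. Poly_Mapping.lookup (Wexp P xs q) k = Poly_Mapping.lookup z k + q * Poly_Mapping.lookup (eI I) k"
    unfolding hh(4) z_def by (simp add: lookup_add lookup_smul algebra_simps)
  have pth: "is_path P xs" using mp by (simp add: is_maximal_path_def)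
  have t0: "0 < length xs" using pth by (simp add: is_path_def)
  have inP: "\<And>i. i < length xs \<Longrightarrow> xs ! i \<in> P" using pth by (auto simp: is_path_def)
  let ?u = "len_star P xs"
  let ?l = "length xs - 1"
  have WN: "Poly_Mapping.lookup z None + q = (?u + 2) * (q - 1)"
    using Wk[of None] W_None[of q] by (simp add: lookup_eI_None)
  have ex: "(?u + 2) * (q - 1) = (?u + 1) * (q - 1) + (q - 1)" by (simp add: algebra_simps)
  show False
  proof (cases "xs ! 0 \<in> I")
    case False
    have "Poly_Mapping.lookup z (Some (xs ! 0)) = (q - 1) * (?u + 1)"
      using Wk[of "Some (xs ! 0)"] W_Some[OF inP[OF t0], of q] fval_first[OF fin mp sc] False
      by (simp add: lookup_eI_Some[OF fI])
    moreover have "Poly_Mapping.lookup z (Some (xs ! 0)) \<le> Poly_Mapping.lookup z None"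
      using cz inP[OF t0] by (simp add: cone_def)
    ultimately show False using WN ex q0 by (simp add: algebra_simps)
  next
    case x0: True
    show False
    proof (cases "xs ! ?l \<in> I")
      case True
      have "(q - 1) * 1 = Poly_Mapping.lookup z (Some (xs ! ?l)) + q"
        using Wk[of "Some (xs ! ?l)"] W_Some[OF inP, of ?l q] fval_last[OF fin mp sc] True t0
        by (simp add: lookup_eI_Some[OF fI])
      then show False using q0 by simp
    next
      case xl: False
      obtain m where m: "m \<le> ?l" "xs ! m \<notin> I" "\<forall>j. 0 \<le> j \<and> j < m \<longrightarrow> \<not> xs ! j \<notin> I"
        using first_after[of "\<lambda>j. xs ! j \<notin> I" ?l 0, OF xl] by auto
      have m0: "0 < m" using m x0 by (cases m) auto
      define i where "i = m - 1"
      have si: "Suc i < length xs" using m m0 t0 i_def by simp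
      have xi: "xs ! i \<in> I" using m i_def m0 by simp
      have xsi: "xs ! Suc i \<notin> I" using m i_def m0 by simp
      have cov: "covers P (xs ! i) (xs ! Suc i) \<or> covers P (xs ! Suc i) (xs ! i)"
        using pth si by (simp add: is_path_def)
      have up: "covers P (xs ! i) (xs ! Suc i)"
      proof (rule ccontr)
        assume "\<not> covers P (xs ! i) (xs ! Suc i)"
        then have "xs ! Suc i \<le> xs ! i" using cov by (auto simp: covers_def)
        then have "xs ! Suc i \<in> I" using hh(3) xi inP[OF si] by (auto simp: poset_ideals_def)
        then show False using xsi by simp
      qed
      have fs: "fval P xs (xs ! i) \<le> fval P xs (xs ! Suc i) + 1" by (rule fval_step[OF fin mp sc si up])
      have zi: "(q - 1) * fval P xs (xs ! i) = Poly_Mapping.lookup z (Some (xs ! i)) + q"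
        using Wk[of "Some (xs ! i)"] W_Some[OF inP, of i q] xi si by (simp add: lookup_eI_Some[OF fI])
      have zsi: "(q - 1) * fval P xs (xs ! Suc i) = Poly_Mapping.lookup z (Some (xs ! Suc i))"
        using Wk[of "Some (xs ! Suc i)"] W_Some[OF inP, of "Suc i" q] xsi si by (simp add: lookup_eI_Some[OF fI])
      have "Poly_Mapping.lookup z (Some (xs ! Suc i)) \<le> Poly_Mapping.lookup z (Some (xs ! i))"
        using cz inP[OF si] inP[of i] si up by (auto simp: cone_def covers_def)
      moreover have "(q - 1) * fval P xs (xs ! i) \<le> (q - 1) * fval P xs (xs ! Suc i) + (q - 1)"
        using mult_le_mono2[OF fs, of "q - 1"] by (simp add: algebra_simps)
      ultimately show False using zi zsi q0 by simp
    qed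
  qed
qed

end


lemma nu_lower:
  fixes P :: "'a::order set"
  assumes fin: "finite P" and mp: "is_maximal_path P xs" and sc: "star_cond P xs"
    and pr: "prime CHAR('k::field)" and qe: "q = CHAR('k) ^ e"
  shows "(len_star P xs + 2) * (q - 1) \<le> hibi_nu TYPE('k) P q"
proof -
  have q0: "0 < q" using pr qe by (simp add: prime_gt_0_nat)
  let ?n = "(len_star P xs + 2) * (q - 1)"
  let ?L = "Lst P xs q"
  let ?w = "prod_list (map hibi_gen ?L) :: ('a,'k) mpoly"
  have wW: "?w = Poly_Mapping.single (Wexp P xs q) 1" by (simp add: prod_hibi Wexp_def)
  have setm: "set (map hibi_gen ?L) \<subseteq> (hibi_max P :: ('a,'k) mpoly set)"
  proof
    fix g :: "('a,'k) mpoly" assume "g \<in> set (map hibi_gen ?L)"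
    then obtain j where "g = hibi_gen (Jset P xs j)" using set_Lst[of P xs q] by auto
    then have "g \<in> (hibi_gens P :: ('a,'k) mpoly set)" using Jset_ideal[OF fin mp sc] by (auto simp: hibi_gens_def)
    then show "g \<in> hibi_max P" by (rule gens_in_max)
  qed
  have "?w \<in> {prod_list ys | ys. length ys = ?n \<and> set ys \<subseteq> (hibi_max P :: ('a,'k) mpoly set)}"
    using setm len_Lst[of P xs q] by (intro CollectI exI[of _ "map hibi_gen ?L"]) simp
  then have wpow: "?w \<in> ideal_power (hibi_ring P) (hibi_max P) ?n"
    unfolding ideal_power_def by (rule ideal_gen_base[OF _ hibi_ring_one])
  have wnot: "?w \<notin> frobenius_power (hibi_ring P) (hibi_max P) q"
  proof
    assume "?w \<in> frobenius_power (hibi_ring P) (hibi_max P) q"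
    from keys_frob[OF this fin pr qe] have "\<exists>h h' I. cone P h \<and> cone P h' \<and> I \<in> poset_ideals P \<and> Wexp P xs q = h + smul q (h' + eI I)"
      unfolding wW by simp
    then show False using W_nonmem[OF fin mp sc q0] by blast
  qed
  have "?n \<in> {r. \<not> (ideal_power (hibi_ring P) (hibi_max P :: ('a,'k) mpoly set) r
                           \<subseteq> frobenius_power (hibi_ring P) (hibi_max P) q)}"
    using wpow wnot by blast
  then show ?thesis unfolding hibi_nu_def by (rule Max_ge[OF nu_set_finite[OF fin]])
qed

lemma exists_minimal: "finite P \<Longrightarrow> P \<noteq> {} \<Longrightarrow> \<exists>m. minimal_in P m"
  using finite_has_minimal[of P] by (auto simp: minimal_in_def order.strict_iff_order)

lemma exists_cover:
  assumes "finite P" "x \<in> P" "\<not> maximal_in P x"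
  shows "\<exists>c. covers P x c"
proof -
  have "{y\<in>P. x < y} \<noteq> {}" using assms by (auto simp: maximal_in_def)
  then obtain c where c: "c \<in> {y\<in>P. x < y}" "\<forall>b\<in>{y\<in>P. x < y}. b \<le> c \<longrightarrow> c = b"
    using finite_has_minimal[of "{y\<in>P. x < y}"] assms(1) by auto
  have "covers P x c" unfolding covers_def
    using c assms(2) by (auto simp: order.strict_iff_order)
  then show ?thesis by blast
qed

definition chains :: "'a::order set \<Rightarrow> 'a list set" where
  "chains P = {ys. ys \<noteq> [] \<and> distinct ys \<and> set ys \<subseteq> P \<and> minimal_in P (hd ys) \<and>
     (\<forall>i. Suc i < length ys \<longrightarrow> covers P (ys ! i) (ys ! Suc i))}"

lemma chain_le_last:
  assumes "ys \<in> chains P" "i < length ys"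
  shows "ys ! i \<le> ys ! (length ys - 1)"
proof -
  have "\<And>j. i \<le> j \<Longrightarrow> j < length ys \<Longrightarrow> ys ! i \<le> ys ! j"
  proof -
    fix j assume "i \<le> j" "j < length ys"
    then show "ys ! i \<le> ys ! j"
    proof (induction j)
      case 0 then show ?case by simp
    next
      case (Suc j)
      show ?case
      proof (cases "i = Suc j")
        case True then show ?thesis by simp
      next
        case False
        then have "ys ! i \<le> ys ! j" using Suc by simp
        moreover have "covers P (ys ! j) (ys ! Suc j)" using assms(1) Suc(3) by (simp add: chains_def)
        ultimately show ?thesis by (auto simp: covers_def)
      qed
    qed
  qed
  then show ?thesis using assms by simp
qed

lemma chain_maximal_path:
  assumes fin: "finite P" and ne: "P \<noteq> {}"
  shows "\<exists>xs. is_maximal_path P xs \<and> star_cond P xs"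
proof -
  obtain m where m: "minimal_in P m" using exists_minimal[OF fin ne] by blast
  have mC: "[m] \<in> chains P" using m by (auto simp: chains_def minimal_in_def)
  have bound: "\<And>ys. ys \<in> chains P \<Longrightarrow> length ys \<le> card P"
  proof -
    fix ys assume "ys \<in> chains P"
    then have "distinct ys" "set ys \<subseteq> P" by (auto simp: chains_def)
    then show "length ys \<le> card P" using card_mono[OF fin] distinct_card by metis
  qed
  have finL: "finite (length ` chains P)" by (rule finite_subset[of _ "{..card P}"]) (auto dest: bound)
  have neL: "length ` chains P \<noteq> {}" using mC by blast
  obtain ys where ys: "ys \<in> chains P" "length ys = Max (length ` chains P)"
    using Max_in[OF finL neL] by auto
  have ysne: "ys \<noteq> []" using ys by (simp add: chains_def)
  have lastmax: "maximal_in P (last ys)"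
  proof (rule ccontr)
    assume nm: "\<not> maximal_in P (last ys)"
    have lP: "last ys \<in> P" using ys ysne by (auto simp: chains_def)
    obtain c where c: "covers P (last ys) c" using exists_cover[OF fin lP nm] by blast
    have lastn: "last ys = ys ! (length ys - 1)" using ysne by (simp add: last_conv_nth)
    have cn: "c \<notin> set ys"
    proof
      assume "c \<in> set ys"
      then obtain i where i: "i < length ys" "ys ! i = c" by (auto simp: in_set_conv_nth)
      have "c \<le> last ys" using chain_le_last[OF ys(1) i(1)] i lastn by simp
      then show False using c by (auto simp: covers_def)
    qed
    have "ys @ [c] \<in> chains P"
      unfolding chains_def
    proof (intro CollectI conjI allI impI)
      show "ys @ [c] \<noteq> []" by simp
      show "distinct (ys @ [c])" using ys cn by (simp add: chains_def)
      show "set (ys @ [c]) \<subseteq> P" using ys c by (auto simp: chains_def covers_def)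
      show "minimal_in P (hd (ys @ [c]))" using ys ysne by (simp add: chains_def)
      fix i assume i: "Suc i < length (ys @ [c])"
      show "covers P ((ys @ [c]) ! i) ((ys @ [c]) ! Suc i)"
      proof (cases "Suc i < length ys")
        case True then show ?thesis using ys by (simp add: chains_def nth_append)
      next
        case False
        then have "i = length ys - 1" using i by simp
        then show ?thesis using c lastn ysne by (simp add: nth_append)
      qed
    qed
    then have "length (ys @ [c]) \<in> length ` chains P" by (rule imageI)
    then have "length (ys @ [c]) \<le> Max (length ` chains P)" by (rule Max_ge[OF finL])
    then show False using ys by simp
  qed
  have path: "is_path P ys"
    unfolding is_path_def
  proof (intro conjI allI impI)
    show "ys \<noteq> []" "distinct ys" "set ys \<subseteq> P" "minimal_in P (hd ys)" using ys by (auto simp: chains_def)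
    fix i assume "Suc i < length ys"
    then show "covers P (ys ! i) (ys ! Suc i) \<or> covers P (ys ! Suc i) (ys ! i)" using ys by (simp add: chains_def)
  next
    assume "2 \<le> length ys"
    then have "Suc (length ys - 2) < length ys" "Suc (length ys - 2) = length ys - 1" by auto
    then show "covers P (ys ! (length ys - 2)) (ys ! (length ys - 1))" using ys by (metis (no_types, lifting) chains_def mem_Collect_eq)
  qed
  have mpth: "is_maximal_path P ys" using path lastmax by (simp add: is_maximal_path_def)
  have "{i. loc_max P ys i} = {length ys - 1}"
  proof (intro set_eqI iffI)
    fix i assume "i \<in> {i. loc_max P ys i}"
    then have li: "i < length ys" "i = length ys - 1 \<or> covers P (ys ! Suc i) (ys ! i)" by (auto simp: loc_max_def)
    show "i \<in> {length ys - 1}"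
    proof (rule ccontr)
      assume "i \<notin> {length ys - 1}"
      then have "Suc i < length ys" "covers P (ys ! Suc i) (ys ! i)" using li by auto
      moreover then have "covers P (ys ! i) (ys ! Suc i)" using ys by (simp add: chains_def)
      ultimately show False by (auto simp: covers_def)
    qed
  next
    fix i assume "i \<in> {length ys - 1}"
    then show "i \<in> {i. loc_max P ys i}" using ysne by (simp add: loc_max_def)
  qed
  then have "length (lmax_pos P ys) = 1" by (simp add: lmax_pos_def)
  then have "star_cond P ys" by (simp add: star_cond_def)
  then show ?thesis using mpth by blast
qed

lemma rank_star_attained:
  assumes fin: "finite P" and ne: "P \<noteq> {}"
  shows "\<exists>xs. is_maximal_path P xs \<and> star_cond P xs \<and> len_star P xs = rank_star P"
proof -
  let ?S = "{len_star P xs | xs. is_maximal_path P xs \<and> star_cond P xs}"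
  have "?S \<subseteq> {..card P}"
  proof
    fix n assume "n \<in> ?S"
    then obtain xs where xs: "n = len_star P xs" "is_maximal_path P xs" by blast
    have "len_star P xs \<le> card {i. Suc i < length xs}"
      unfolding len_star_def by (rule card_mono) (auto intro: finite_subset[of _ "{..<length xs}"])
    also have "\<dots> \<le> length xs"
      by (rule order.trans[OF card_mono[of "{..<length xs}"]]) auto
    also have "\<dots> \<le> card P"
    proof -
      have "distinct xs" "set xs \<subseteq> P" using xs(2) by (auto simp: is_maximal_path_def is_path_def)
      then show ?thesis using card_mono[OF fin] distinct_card by metis
    qed
    finally show "n \<in> {..card P}" using xs by simp
  qed
  then have finS: "finite ?S" by (rule finite_subset) simp
  have neS: "?S \<noteq> {}" using chain_maximal_path[OF fin ne] by blast
  have "rank_star P \<in> ?S" unfolding rank_star_def by (rule Max_in[OF finS neS])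
  then show ?thesis by auto
qed


theorem lemma2p5:
  fixes P :: "'a::order set" and p :: nat
  assumes "finite P" and "P \<noteq> {}"
    and "CHAR('k::field) = p" and "p > 0"
  shows "liminf (\<lambda>e. ereal (real (hibi_nu TYPE('k) P (p ^ e)) / real (p ^ e)))
           \<ge> ereal (real (rank_star P) + 2)"
proof -
  have pr: "prime CHAR('k)" using assms(3,4) prime_CHAR_semidom by auto
  then have p2: "2 \<le> p" using assms(3) prime_ge_2_nat by blast
  obtain xs where xs: "is_maximal_path P xs" "star_cond P xs" "len_star P xs = rank_star P"
    using rank_star_attained[OF assms(1,2)] by blast
  define u where "u = real (rank_star P) + 2"
  have bound: "u - u * (1 / real p) ^ e \<le> real (hibi_nu TYPE('k) P (p ^ e)) / real (p ^ e)" for e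
  proof -
    have "(len_star P xs + 2) * (p ^ e - 1) \<le> hibi_nu TYPE('k) P (p ^ e)"
      by (rule nu_lower[OF assms(1) xs(1,2) pr]) (simp add: assms(3))
    then have "real ((rank_star P + 2) * (p ^ e - 1)) \<le> real (hibi_nu TYPE('k) P (p ^ e))"
      using xs(3) by (simp only: of_nat_le_iff)
    moreover have pe: "1 \<le> p ^ e" using assms(4) by simp
    moreover have "real ((rank_star P + 2) * (p ^ e - 1)) = u * (real (p ^ e) - 1)"
      unfolding u_def of_nat_mult of_nat_diff[OF pe] by simp
    ultimately have "u * (real (p ^ e) - 1) \<le> real (hibi_nu TYPE('k) P (p ^ e))"
      by linarith
    moreover have ppos: "0 < real (p ^ e)" using assms(4) by simp
    ultimately have "u * (real (p ^ e) - 1) / real (p ^ e) \<le> real (hibi_nu TYPE('k) P (p ^ e)) / real (p ^ e)"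
      by (simp add: divide_right_mono)
    moreover have "u * (real (p ^ e) - 1) / real (p ^ e) = u - u * (1 / real p) ^ e"
      using ppos by (simp add: field_simps power_one_over)
    ultimately show ?thesis by simp
  qed
  have lim: "(\<lambda>e. ereal (u - u * (1 / real p) ^ e)) \<longlonglongrightarrow> ereal u"
  proof -
    have rp: "2 \<le> real p" using p2 by simp
    then have a: "1 / real p < 1" by (simp add: divide_less_eq)
    have b: "0 \<le> 1 / real p" by simp
    have "norm (1 / real p) < 1" unfolding real_norm_def using a b by linarith
    then have "(\<lambda>e. (1 / real p) ^ e) \<longlonglongrightarrow> 0" by (rule LIMSEQ_power_zero)
    then have "(\<lambda>e. u - u * (1 / real p) ^ e) \<longlonglongrightarrow> u - u * 0"
      by (rule tendsto_diff[OF tendsto_const tendsto_mult[OF tendsto_const]])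
    then show ?thesis by simp
  qed
  have "ereal u = liminf (\<lambda>e. ereal (u - u * (1 / real p) ^ e))"
    using lim_imp_Liminf[OF trivial_limit_sequentially lim] by simp
  also have "\<dots> \<le> liminf (\<lambda>e. ereal (real (hibi_nu TYPE('k) P (p ^ e)) / real (p ^ e)))"
    by (intro Liminf_mono) (use bound in simp)
  finally show ?thesis by (simp add: u_def)
qed


end
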